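(* Let $K$ be a number field, $L/K$ a (possibly infinite) Galois extension in which every element of $\operatorname{Gal}(L/K)$ has finite order, and $E/K$ an elliptic curve. Let $q$ be an odd prime power with $E(L)[q]\cong\mathbb{Z}/q\mathbb{Z}$. For $\sigma\in\operatorname{Gal}(L/K)$ let $\operatorname{ord}(\sigma)$ be its order, and let $\phi$ be Euler's totient function. (1) If $\gcd(\phi(q),\operatorname{ord}(\sigma))=1$ for all $\sigma\in\operatorname{Gal}(L/K)$, then $E(L)[q]=E(K)[q]$. (2) If $\gcd(\phi(q),\operatorname{ord}(\sigma))\le 2$ for all $\sigma\in\operatorname{Gal}(L/K)$, then there is $d\in K$ with $\sqrt d\in L$ such that $E(L)[q]\cong E_d(L)[q]=E_d(K)[q]$.
   Context: $E(F)[q]$ denotes the $q$-torsion points of $E$ defined over $F$ (points killed by $q$). $E_d$ denotes the quadratic twist of $E$ by $d$. *)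

theory Defs
  imports Complex_Main "HOL-Computational_Algebra.Polynomial" "HOL-Number_Theory.Totient"
begin

(* All fields are modelled as subfields of the complex numbers. *)

definition is_subfield :: "complex set \<Rightarrow> bool" where
  "is_subfield F \<longleftrightarrow> 0 \<in> F \<and> 1 \<in> F \<and>
     (\<forall>x\<in>F. \<forall>y\<in>F. x + y \<in> F \<and> x * y \<in> F) \<and>
     (\<forall>x\<in>F. - x \<in> F) \<and> (\<forall>x\<in>F. x \<noteq> 0 \<longrightarrow> inverse x \<in> F)"

definition number_field :: "complex set \<Rightarrow> bool" where
  "number_field K \<longleftrightarrow> is_subfield K \<and>
     (\<exists>B. set B \<subseteq> K \<and> (\<forall>x\<in>K. \<exists>c. x = (\<Sum>i<length B. of_real (c i) * B ! i) \<and> (\<forall>i. c i \<in> \<rat>)))"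

definition poly_over :: "complex set \<Rightarrow> complex poly \<Rightarrow> bool" where
  "poly_over K p \<longleftrightarrow> (\<forall>i. coeff p i \<in> K)"

definition irreducible_over :: "complex set \<Rightarrow> complex poly \<Rightarrow> bool" where
  "irreducible_over K p \<longleftrightarrow> poly_over K p \<and> degree p \<ge> 1 \<and>
     (\<forall>g h. poly_over K g \<longrightarrow> poly_over K h \<longrightarrow> p = g * h \<longrightarrow> degree g = 0 \<or> degree h = 0)"

definition splits_in :: "complex set \<Rightarrow> complex poly \<Rightarrow> bool" where
  "splits_in L p \<longleftrightarrow> (\<exists>c rs. set rs \<subseteq> L \<and> p = smult c (prod_list (map (\<lambda>r. [:- r, 1:]) rs)))"

(* Galois extension L/K (characteristic 0, so separability is automatic):
   L is an algebraic and normal extension of K *)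
definition galois_ext :: "complex set \<Rightarrow> complex set \<Rightarrow> bool" where
  "galois_ext L K \<longleftrightarrow> is_subfield K \<and> is_subfield L \<and> K \<subseteq> L \<and>
     (\<forall>\<alpha>\<in>L. \<exists>p. p \<noteq> 0 \<and> poly_over K p \<and> poly p \<alpha> = 0) \<and>
     (\<forall>p. irreducible_over K p \<longrightarrow> (\<exists>\<alpha>\<in>L. poly p \<alpha> = 0) \<longrightarrow> splits_in L p)"

(* Gal(L/K): field automorphisms of L fixing K pointwise (values off L irrelevant) *)
definition Gal :: "complex set \<Rightarrow> complex set \<Rightarrow> (complex \<Rightarrow> complex) set" where
  "Gal L K = {\<sigma>. bij_betw \<sigma> L L \<and> (\<forall>x\<in>L. \<forall>y\<in>L. \<sigma> (x + y) = \<sigma> x + \<sigma> y \<and> \<sigma> (x * y) = \<sigma> x * \<sigma> y)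
                 \<and> (\<forall>x\<in>K. \<sigma> x = x)}"

definition has_finite_order :: "complex set \<Rightarrow> (complex \<Rightarrow> complex) \<Rightarrow> bool" where
  "has_finite_order L \<sigma> \<longleftrightarrow> (\<exists>n>0. \<forall>x\<in>L. (\<sigma> ^^ n) x = x)"

definition aut_ord :: "complex set \<Rightarrow> (complex \<Rightarrow> complex) \<Rightarrow> nat" where
  "aut_ord L \<sigma> = (LEAST n. n > 0 \<and> (\<forall>x\<in>L. (\<sigma> ^^ n) x = x))"

datatype ecpt = Inf | Aff complex complex

definition elliptic :: "complex \<Rightarrow> complex \<Rightarrow> bool" where
  "elliptic a b \<longleftrightarrow> 4 * a ^ 3 + 27 * b ^ 2 \<noteq> 0"

definition ec_points :: "complex \<Rightarrow> complex \<Rightarrow> complex set \<Rightarrow> ecpt set" where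
  "ec_points a b F = {Inf} \<union> {Aff x y | x y. x \<in> F \<and> y \<in> F \<and> y ^ 2 = x ^ 3 + a * x + b}"

fun ec_add :: "complex \<Rightarrow> complex \<Rightarrow> ecpt \<Rightarrow> ecpt \<Rightarrow> ecpt" where
  "ec_add a b Inf P = P"
| "ec_add a b (Aff x y) Inf = Aff x y"
| "ec_add a b (Aff x1 y1) (Aff x2 y2) =
     (if x1 = x2 \<and> y1 = - y2 then Inf
      else (let l = (if x1 = x2 then (3 * x1 ^ 2 + a) / (2 * y1) else (y2 - y1) / (x2 - x1));
                x3 = l ^ 2 - x1 - x2
            in Aff x3 (l * (x1 - x3) - y1)))"

definition ec_smul :: "complex \<Rightarrow> complex \<Rightarrow> nat \<Rightarrow> ecpt \<Rightarrow> ecpt" where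
  "ec_smul a b n P = (ec_add a b P ^^ n) Inf"

definition ec_torsion :: "complex \<Rightarrow> complex \<Rightarrow> complex set \<Rightarrow> nat \<Rightarrow> ecpt set" where
  "ec_torsion a b F q = {P \<in> ec_points a b F. ec_smul a b q P = Inf}"

definition cyclic_of_order :: "complex \<Rightarrow> complex \<Rightarrow> ecpt set \<Rightarrow> nat \<Rightarrow> bool" where
  "cyclic_of_order a b S q \<longleftrightarrow>
     (\<exists>f. bij_betw f {0..<q} S \<and> (\<forall>i<q. \<forall>j<q. f ((i + j) mod q) = ec_add a b (f i) (f j)))"

definition ec_group_iso :: "complex \<Rightarrow> complex \<Rightarrow> ecpt set \<Rightarrow> complex \<Rightarrow> complex \<Rightarrow> ecpt set \<Rightarrow> bool" where
  "ec_group_iso a b S a' b' T \<longleftrightarrow>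
     (\<exists>f. bij_betw f S T \<and> (\<forall>P\<in>S. \<forall>Q\<in>S. f (ec_add a b P Q) = ec_add a' b' (f P) (f Q)))"

definition twist_a :: "complex \<Rightarrow> complex \<Rightarrow> complex" where "twist_a d a = d ^ 2 * a"
definition twist_b :: "complex \<Rightarrow> complex \<Rightarrow> complex" where "twist_b d b = d ^ 3 * b"

end

theory Submission
  imports Defs "HOL-Computational_Algebra.Fundamental_Theorem_Algebra"
begin


lemma sf_0: "is_subfield F \<Longrightarrow> 0 \<in> F" by (simp add: is_subfield_def)
lemma sf_1: "is_subfield F \<Longrightarrow> 1 \<in> F" by (simp add: is_subfield_def)
lemma sf_add: "is_subfield F \<Longrightarrow> x \<in> F \<Longrightarrow> y \<in> F \<Longrightarrow> x + y \<in> F" by (simp add: is_subfield_def)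
lemma sf_mult: "is_subfield F \<Longrightarrow> x \<in> F \<Longrightarrow> y \<in> F \<Longrightarrow> x * y \<in> F" by (simp add: is_subfield_def)
lemma sf_uminus: "is_subfield F \<Longrightarrow> x \<in> F \<Longrightarrow> - x \<in> F" by (simp add: is_subfield_def)
lemma sf_inverse: "is_subfield F \<Longrightarrow> x \<in> F \<Longrightarrow> inverse x \<in> F"
  by (cases "x = 0") (auto simp add: is_subfield_def)
lemma sf_diff: "is_subfield F \<Longrightarrow> x \<in> F \<Longrightarrow> y \<in> F \<Longrightarrow> x - y \<in> F"
  using sf_add[of F x "-y"] sf_uminus[of F y] by simp
lemma sf_divide: "is_subfield F \<Longrightarrow> x \<in> F \<Longrightarrow> y \<in> F \<Longrightarrow> x / y \<in> F"
  using sf_mult[of F x "inverse y"] sf_inverse[of F y] by (simp add: divide_inverse)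
lemma sf_power: "is_subfield F \<Longrightarrow> x \<in> F \<Longrightarrow> x ^ n \<in> F"
  by (induction n) (auto intro: sf_1 sf_mult)
lemma sf_of_nat: "is_subfield F \<Longrightarrow> of_nat n \<in> F"
  by (induction n) (auto intro: sf_0 sf_1 sf_add)
lemma sf_numeral: "is_subfield F \<Longrightarrow> numeral n \<in> F"
  using sf_of_nat[of F "numeral n"] by simp
lemma sf_sum: "is_subfield F \<Longrightarrow> (\<And>i. i \<in> A \<Longrightarrow> f i \<in> F) \<Longrightarrow> sum f A \<in> F"
  by (induction A rule: infinite_finite_induct) (auto intro: sf_0 sf_add)

lemmas sf_closed = sf_0 sf_1 sf_add sf_mult sf_uminus sf_inverse sf_diff sf_divide sf_power sf_of_nat sf_numeral

definition sring :: "complex set \<Rightarrow> bool" where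
  "sring D \<longleftrightarrow> 0 \<in> D \<and> 1 \<in> D \<and> (\<forall>x\<in>D. \<forall>y\<in>D. x + y \<in> D \<and> x * y \<in> D) \<and> (\<forall>x\<in>D. - x \<in> D)"

lemma sf_sring: "is_subfield F \<Longrightarrow> sring F"
  by (simp add: is_subfield_def sring_def)

lemma sr_0: "sring F \<Longrightarrow> 0 \<in> F" by (simp add: sring_def)
lemma sr_1: "sring F \<Longrightarrow> 1 \<in> F" by (simp add: sring_def)
lemma sr_add: "sring F \<Longrightarrow> x \<in> F \<Longrightarrow> y \<in> F \<Longrightarrow> x + y \<in> F" by (simp add: sring_def)
lemma sr_mult: "sring F \<Longrightarrow> x \<in> F \<Longrightarrow> y \<in> F \<Longrightarrow> x * y \<in> F" by (simp add: sring_def)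
lemma sr_uminus: "sring F \<Longrightarrow> x \<in> F \<Longrightarrow> - x \<in> F" by (simp add: sring_def)
lemma sr_diff: "sring F \<Longrightarrow> x \<in> F \<Longrightarrow> y \<in> F \<Longrightarrow> x - y \<in> F"
  using sr_add[of F x "-y"] sr_uminus[of F y] by simp
lemma sr_power: "sring F \<Longrightarrow> x \<in> F \<Longrightarrow> x ^ n \<in> F"
  by (induction n) (auto intro: sr_1 sr_mult)
lemma sr_of_nat: "sring F \<Longrightarrow> of_nat n \<in> F"
  by (induction n) (auto intro: sr_0 sr_1 sr_add)
lemma sr_sum: "sring F \<Longrightarrow> (\<And>i. i \<in> A \<Longrightarrow> f i \<in> F) \<Longrightarrow> sum f A \<in> F"
  by (induction A rule: infinite_finite_induct) (auto intro: sr_0 sr_add)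

lemma poly_over_coeff: "poly_over F p \<Longrightarrow> Polynomial.coeff p n \<in> F"
  by (simp add: poly_over_def)
lemma poly_over_0: "sring F \<Longrightarrow> poly_over F 0"
  by (simp add: poly_over_def sr_0)
lemma poly_over_const: "sring F \<Longrightarrow> c \<in> F \<Longrightarrow> poly_over F [:c:]"
  by (simp add: poly_over_def coeff_pCons sr_0 split: nat.split)
lemma poly_over_pCons: "poly_over F (pCons a p) \<longleftrightarrow> a \<in> F \<and> poly_over F p"
  apply (simp add: poly_over_def)
  by (metis coeff_pCons_0 coeff_pCons_Suc not0_implies_Suc)
lemma poly_over_add: "sring F \<Longrightarrow> poly_over F p \<Longrightarrow> poly_over F q \<Longrightarrow> poly_over F (p + q)"
  by (simp add: poly_over_def sr_add)
lemma poly_over_uminus: "sring F \<Longrightarrow> poly_over F p \<Longrightarrow> poly_over F (- p)"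
  by (simp add: poly_over_def sr_uminus)
lemma poly_over_diff: "sring F \<Longrightarrow> poly_over F p \<Longrightarrow> poly_over F q \<Longrightarrow> poly_over F (p - q)"
  by (simp add: poly_over_def sr_diff)
lemma poly_over_mult: "sring F \<Longrightarrow> poly_over F p \<Longrightarrow> poly_over F q \<Longrightarrow> poly_over F (p * q)"
  by (simp add: poly_over_def coeff_mult sr_sum sr_mult)
lemma poly_over_smult: "sring F \<Longrightarrow> c \<in> F \<Longrightarrow> poly_over F p \<Longrightarrow> poly_over F (smult c p)"
  by (simp add: poly_over_def sr_mult)
lemma poly_over_monom: "sring F \<Longrightarrow> c \<in> F \<Longrightarrow> poly_over F (monom c n)"
  by (simp add: poly_over_def coeff_monom sr_0)
lemma poly_over_pderiv: "sring F \<Longrightarrow> poly_over F p \<Longrightarrow> poly_over F (pderiv p)"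
  by (simp add: poly_over_def coeff_pderiv sr_mult sr_of_nat del: of_nat_Suc)
lemma poly_over_poly: "sring F \<Longrightarrow> poly_over F p \<Longrightarrow> x \<in> F \<Longrightarrow> poly p x \<in> F"
  by (induction p) (auto simp: poly_over_pCons intro: sr_add sr_mult sr_0)
lemma poly_over_mono: "poly_over F p \<Longrightarrow> F \<subseteq> G \<Longrightarrow> poly_over G p"
  by (auto simp: poly_over_def)
lemma poly_over_lead: "poly_over F p \<Longrightarrow> lead_coeff p \<in> F"
  by (simp add: poly_over_def)

locale rhom =
  fixes D :: "complex set" and \<tau> :: "complex \<Rightarrow> complex"
  assumes sr: "sring D"
    and t_add: "x \<in> D \<Longrightarrow> y \<in> D \<Longrightarrow> \<tau> (x + y) = \<tau> x + \<tau> y"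
    and t_mult: "x \<in> D \<Longrightarrow> y \<in> D \<Longrightarrow> \<tau> (x * y) = \<tau> x * \<tau> y"
    and t_0: "\<tau> 0 = 0" and t_1: "\<tau> 1 = 1"
begin

lemma t_uminus: "x \<in> D \<Longrightarrow> \<tau> (- x) = - \<tau> x"
  using t_add[of x "-x"] sr_uminus[OF sr, of x] t_0 by (simp add: eq_neg_iff_add_eq_0 add.commute)

lemma t_diff: "x \<in> D \<Longrightarrow> y \<in> D \<Longrightarrow> \<tau> (x - y) = \<tau> x - \<tau> y"
  using t_add[of x "-y"] t_uminus[of y] sr_uminus[OF sr, of y] by simp

lemma t_sum: "(\<And>i. i \<in> A \<Longrightarrow> f i \<in> D) \<Longrightarrow> \<tau> (sum f A) = (\<Sum>i\<in>A. \<tau> (f i))"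
proof (induction A rule: infinite_finite_induct)
  case (insert x F)
  then show ?case by (simp add: t_add sr_sum[OF sr])
qed (auto simp: t_0)

lemma t_power: "x \<in> D \<Longrightarrow> \<tau> (x ^ n) = \<tau> x ^ n"
  by (induction n) (auto simp: t_1 t_mult sr_power[OF sr])

lemma coeff_mp: "Polynomial.coeff (map_poly \<tau> p) n = \<tau> (Polynomial.coeff p n)"
  by (simp add: coeff_map_poly t_0)

lemma mp_add: "poly_over D p \<Longrightarrow> poly_over D q \<Longrightarrow> map_poly \<tau> (p + q) = map_poly \<tau> p + map_poly \<tau> q"
  by (rule poly_eqI) (simp add: coeff_mp t_add poly_over_coeff)
lemma mp_uminus: "poly_over D p \<Longrightarrow> map_poly \<tau> (- p) = - map_poly \<tau> p"
  by (rule poly_eqI) (simp add: coeff_mp t_uminus poly_over_coeff)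
lemma mp_diff: "poly_over D p \<Longrightarrow> poly_over D q \<Longrightarrow> map_poly \<tau> (p - q) = map_poly \<tau> p - map_poly \<tau> q"
  by (rule poly_eqI) (simp add: coeff_mp t_diff poly_over_coeff)
lemma mp_smult: "c \<in> D \<Longrightarrow> poly_over D p \<Longrightarrow> map_poly \<tau> (smult c p) = smult (\<tau> c) (map_poly \<tau> p)"
  by (rule poly_eqI) (simp add: coeff_mp t_mult poly_over_coeff)
lemma mp_mult: "poly_over D p \<Longrightarrow> poly_over D q \<Longrightarrow> map_poly \<tau> (p * q) = map_poly \<tau> p * map_poly \<tau> q"
  by (rule poly_eqI) (simp add: coeff_mp coeff_mult t_sum t_mult poly_over_coeff sr_mult[OF sr])
lemma mp_monom: "c \<in> D \<Longrightarrow> map_poly \<tau> (monom c n) = monom (\<tau> c) n"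
  by (rule poly_eqI) (simp add: coeff_mp coeff_monom t_0)
lemma mp_const: "map_poly \<tau> [:c:] = [:\<tau> c:]"
  by (simp add: t_0 map_poly_pCons)
lemma mp_poly: "poly_over D p \<Longrightarrow> x \<in> D \<Longrightarrow> \<tau> (poly p x) = poly (map_poly \<tau> p) (\<tau> x)"
proof (induction p)
  case (pCons a p)
  then show ?case
    by (simp add: poly_over_pCons map_poly_pCons t_0 t_add t_mult poly_over_poly[OF sr] sr_mult[OF sr])
qed (simp add: t_0)
lemma mp_lead: "(\<And>x. x \<in> D \<Longrightarrow> \<tau> x = 0 \<Longrightarrow> x = 0) \<Longrightarrow> poly_over D p \<Longrightarrow>
   degree (map_poly \<tau> p) = degree p \<and> lead_coeff (map_poly \<tau> p) = \<tau> (lead_coeff p)"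
proof (cases "p = 0")
  case False
  assume inj: "\<And>x. x \<in> D \<Longrightarrow> \<tau> x = 0 \<Longrightarrow> x = 0" and p: "poly_over D p"
  have "\<tau> (lead_coeff p) \<noteq> 0" using inj[of "lead_coeff p"] False poly_over_lead[OF p] by auto
  then have c: "Polynomial.coeff (map_poly \<tau> p) (degree p) \<noteq> 0" by (simp add: coeff_mp)
  have "degree (map_poly \<tau> p) \<le> degree p"
    by (rule degree_le) (simp add: coeff_mp coeff_eq_0 t_0)
  moreover have "degree p \<le> degree (map_poly \<tau> p)" using c by (rule le_degree)
  ultimately have "degree (map_poly \<tau> p) = degree p" by simp
  then show ?thesis by (simp add: coeff_mp)
qed (simp add: t_0)

end

section \<open>Galois theory basics\<close>

lemma gal_K: "galois_ext L K \<Longrightarrow> is_subfield K" by (simp add: galois_ext_def)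
lemma gal_L: "galois_ext L K \<Longrightarrow> is_subfield L" by (simp add: galois_ext_def)
lemma gal_KL: "galois_ext L K \<Longrightarrow> K \<subseteq> L" by (simp add: galois_ext_def)
lemma gal_alg: "galois_ext L K \<Longrightarrow> \<alpha> \<in> L \<Longrightarrow> \<exists>p. p \<noteq> 0 \<and> poly_over K p \<and> poly p \<alpha> = 0"
  by (simp add: galois_ext_def)
lemma gal_normal: "galois_ext L K \<Longrightarrow> irreducible_over K p \<Longrightarrow> \<alpha> \<in> L \<Longrightarrow> poly p \<alpha> = 0 \<Longrightarrow> splits_in L p"
  unfolding galois_ext_def by blast

lemma alg_inverse:
  assumes LK: "galois_ext L K" and S: "sring S" "K \<subseteq> S" "S \<subseteq> L" and z: "z \<in> S" "z \<noteq> 0"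
  shows "inverse z \<in> S"
proof -
  obtain p0 where p0: "p0 \<noteq> 0" "poly_over K p0" "poly p0 z = 0"
    using gal_alg[OF LK, of z] z S by auto
  have "poly_over K p \<longrightarrow> p \<noteq> 0 \<longrightarrow> poly p z = 0 \<longrightarrow> inverse z \<in> S" for p
  proof (induction p)
    case (pCons a p)
    show ?case
    proof (intro impI)
      assume h: "poly_over K (pCons a p)" "pCons a p \<noteq> 0" "poly (pCons a p) z = 0"
      then have a: "a \<in> K" and p: "poly_over K p" by (auto simp: poly_over_pCons)
      show "inverse z \<in> S"
      proof (cases "a = 0")
        case True
        with h have "p \<noteq> 0" by auto
        moreover from h True z have "poly p z = 0" by simp
        ultimately show ?thesis using pCons.IH p by blast
      next
        case False
        have "a + z * poly p z = 0" using h by simp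
        then have e: "z * poly p z = - a" by (simp add: eq_neg_iff_add_eq_0 add.commute)
        have "z * (- inverse a * poly p z) = - inverse a * (z * poly p z)" by (simp add: algebra_simps)
        also have "\<dots> = 1" using e False by simp
        finally have "inverse z = - inverse a * poly p z" by (rule inverse_unique)
        moreover have "poly p z \<in> S" using poly_over_poly[OF S(1) poly_over_mono[OF p S(2)] z(1)] .
        moreover have "inverse a \<in> S" using a S(2) sf_inverse[OF gal_K[OF LK]] by auto
        ultimately show ?thesis using S(1) by (simp add: sr_mult sr_uminus)
      qed
    qed
  qed simp
  then show ?thesis using p0 by blast
qed

definition ismin :: "complex set \<Rightarrow> complex \<Rightarrow> complex poly \<Rightarrow> bool" where
  "ismin F \<gamma> m \<longleftrightarrow> poly_over F m \<and> m \<noteq> 0 \<and> poly m \<gamma> = 0 \<and>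
     (\<forall>p. poly_over F p \<and> p \<noteq> 0 \<and> poly p \<gamma> = 0 \<longrightarrow> degree m \<le> degree p)"

lemma minpoly_ex:
  assumes "poly_over D p0" "p0 \<noteq> 0" "poly p0 \<gamma> = 0"
  shows "\<exists>m. ismin D \<gamma> m"
proof -
  have "\<exists>x. (poly_over D x \<and> x \<noteq> 0 \<and> poly x \<gamma> = 0) \<and>
     (\<forall>y. (poly_over D y \<and> y \<noteq> 0 \<and> poly y \<gamma> = 0) \<longrightarrow> degree x \<le> degree y)"
    by (rule ex_has_least_nat[of "\<lambda>p. poly_over D p \<and> p \<noteq> 0 \<and> poly p \<gamma> = 0" p0 degree]) (use assms in auto)
  then show ?thesis unfolding ismin_def by blast
qed

lemma ismin_degree: "ismin D \<gamma> m \<Longrightarrow> degree m \<ge> 1"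
proof (rule ccontr)
  assume m: "ismin D \<gamma> m" and "\<not> degree m \<ge> 1"
  then have "degree m = 0" by simp
  then obtain a where "m = [:a:]" by (meson degree0_coeffs)
  then show False using m unfolding ismin_def by simp
qed

lemma fta_deg: "degree (p :: complex poly) \<ge> 1 \<Longrightarrow> \<exists>z. poly p z = 0"
  by (rule fundamental_theorem_of_algebra_alt) auto

lemma ismin_irred:
  assumes K: "sring K" and m: "ismin K \<gamma> m"
  shows "irreducible_over K m"
  unfolding irreducible_over_def
proof (intro conjI allI impI)
  show "poly_over K m" using m by (simp add: ismin_def)
  show "1 \<le> degree m" using ismin_degree[OF m] .
  fix g h assume g: "poly_over K g" and h: "poly_over K h" and mgh: "m = g * h"
  have nz: "g \<noteq> 0" "h \<noteq> 0" using m mgh by (auto simp: ismin_def)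
  have dm: "degree m = degree g + degree h" using mgh nz by (simp add: degree_mult_eq)
  have "poly g \<gamma> * poly h \<gamma> = 0" using m mgh by (simp add: ismin_def)
  then have "poly g \<gamma> = 0 \<or> poly h \<gamma> = 0" by simp
  then show "degree g = 0 \<or> degree h = 0"
  proof
    assume "poly g \<gamma> = 0"
    then have "degree m \<le> degree g" using m g nz unfolding ismin_def by blast
    then show ?thesis using dm by simp
  next
    assume "poly h \<gamma> = 0"
    then have "degree m \<le> degree h" using m h nz unfolding ismin_def by blast
    then show ?thesis using dm by simp
  qed
qed

lemma splits_root:
  assumes "splits_in L p" "p \<noteq> 0" "poly p \<delta> = 0"
  shows "\<delta> \<in> L"
proof -
  obtain c rs where rs: "set rs \<subseteq> L" "p = smult c (prod_list (map (\<lambda>r. [:- r, 1:]) rs))"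
    using assms(1) unfolding splits_in_def by blast
  have c: "c \<noteq> 0" using rs assms(2) by auto
  have "poly p \<delta> = c * prod_list (map (\<lambda>r. \<delta> - r) rs)"
    unfolding rs(2) by (induction rs) (auto simp: algebra_simps)
  then have "prod_list (map (\<lambda>r. \<delta> - r) rs) = 0" using c assms(3) by simp
  then obtain r where "r \<in> set rs" "\<delta> - r = 0" by (auto simp: prod_list_zero_iff)
  then show ?thesis using rs(1) by auto
qed

context rhom
begin

lemma key:
  assumes inj0: "\<And>x. x \<in> D \<Longrightarrow> \<tau> x = 0 \<Longrightarrow> x = 0"
    and m: "ismin D \<gamma> m" and md: "poly (map_poly \<tau> m) \<delta> = 0"
  shows "poly_over D p \<Longrightarrow> poly p \<gamma> = 0 \<Longrightarrow> poly (map_poly \<tau> p) \<delta> = 0"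
proof (induction "degree p" arbitrary: p rule: less_induct)
  case less
  show ?case
  proof (cases "p = 0")
    case True
    then show ?thesis by simp
  next
    case False
    have mD: "poly_over D m" and m0: "m \<noteq> 0" and mg: "poly m \<gamma> = 0" using m by (auto simp: ismin_def)
    have dmp: "degree m \<le> degree p" using m less.prems False unfolding ismin_def by blast
    have dm1: "degree m \<ge> 1" using ismin_degree[OF m] .
    define k where "k = degree p - degree m"
    define p' where "p' = smult (lead_coeff m) p - smult (lead_coeff p) (monom 1 k * m)"
    have lm: "lead_coeff m \<in> D" "lead_coeff p \<in> D" using mD less.prems by (auto simp: poly_over_lead)
    have p'D: "poly_over D p'" unfolding p'_def
      using lm mD less.prems sr
      by (intro poly_over_diff poly_over_smult poly_over_mult poly_over_monom sr_1) auto
    have p'g: "poly p' \<gamma> = 0" unfolding p'_def using mg less.prems by (simp add: poly_monom)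
    have kk: "k + degree m = degree p" "degree p - k = degree m" "\<not> degree p < k" using dmp k_def by auto
    have le1: "degree (monom (1::complex) k * m) \<le> degree p"
      using degree_mult_le[of "monom (1::complex) k" m] degree_monom_le[of "1::complex" k] kk(1) by linarith
    have le2: "degree (smult (lead_coeff p) (monom (1::complex) k * m)) \<le> degree p"
      using degree_smult_le[of "lead_coeff p" "monom (1::complex) k * m"] le1 by linarith
    have le3: "degree (smult (lead_coeff m) p) \<le> degree p"
      by (rule degree_smult_le)
    have le: "degree p' \<le> degree p" unfolding p'_def
      by (rule degree_diff_le[OF le3 le2])
    have c: "Polynomial.coeff p' (degree p) = 0"
      unfolding p'_def coeff_diff coeff_smult coeff_monom_mult using kk(2,3) by simp
    have lt: "degree p' < degree p"
    proof (rule ccontr)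
      assume "\<not> degree p' < degree p"
      then have "degree p' = degree p" using le by simp
      then have "p' = 0" using c by (metis leading_coeff_0_iff)
      then show False using \<open>degree p' = degree p\<close> dmp dm1 by simp
    qed
    have IH: "poly (map_poly \<tau> p') \<delta> = 0" using less.hyps[OF lt p'D p'g] .
    have "map_poly \<tau> p' = smult (\<tau> (lead_coeff m)) (map_poly \<tau> p) - smult (\<tau> (lead_coeff p)) (monom 1 k * map_poly \<tau> m)"
      unfolding p'_def using lm mD less.prems sr
      by (simp add: mp_diff mp_smult mp_mult mp_monom t_1 poly_over_smult poly_over_mult poly_over_monom sr_1)
    then have "\<tau> (lead_coeff m) * poly (map_poly \<tau> p) \<delta> = 0"
      using IH md by (simp add: poly_monom)
    moreover have "\<tau> (lead_coeff m) \<noteq> 0" using inj0[OF lm(1)] m0 by auto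
    ultimately show ?thesis by simp
  qed
qed

end

section \<open>Partial embeddings\<close>

definition emb :: "complex set \<Rightarrow> complex set \<Rightarrow> (complex \<times> complex) set \<Rightarrow> bool" where
  "emb K L G \<longleftrightarrow> (\<forall>x u v. (x, u) \<in> G \<longrightarrow> (x, v) \<in> G \<longrightarrow> u = v) \<and> (\<forall>k\<in>K. (k, k) \<in> G) \<and>
     G \<subseteq> L \<times> L \<and>
     (\<forall>x u y v. (x, u) \<in> G \<longrightarrow> (y, v) \<in> G \<longrightarrow> (x + y, u + v) \<in> G \<and> (x * y, u * v) \<in> G \<and> (- x, - u) \<in> G)"

definition gf :: "(complex \<times> complex) set \<Rightarrow> complex \<Rightarrow> complex" where
  "gf G x = (THE u. (x, u) \<in> G)"

lemma emb_funD: "emb K L G \<Longrightarrow> (x, u) \<in> G \<Longrightarrow> (x, v) \<in> G \<Longrightarrow> u = v"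
  unfolding emb_def by (elim conjE allE impE) assumption+

lemma emb_K: "emb K L G \<Longrightarrow> k \<in> K \<Longrightarrow> (k, k) \<in> G"
  unfolding emb_def by (elim conjE ballE) auto

lemma emb_sub: "emb K L G \<Longrightarrow> G \<subseteq> L \<times> L"
  unfolding emb_def by (elim conjE)

lemma emb_cl: assumes "emb K L G" "(x, u) \<in> G" "(y, v) \<in> G"
  shows "(x + y, u + v) \<in> G \<and> (x * y, u * v) \<in> G \<and> (- x, - u) \<in> G"
proof -
  have "\<forall>x u y v. (x, u) \<in> G \<longrightarrow> (y, v) \<in> G \<longrightarrow> (x + y, u + v) \<in> G \<and> (x * y, u * v) \<in> G \<and> (- x, - u) \<in> G"
    using assms(1) unfolding emb_def by (elim conjE)
  then have "(x, u) \<in> G \<longrightarrow> (y, v) \<in> G \<longrightarrow> (x + y, u + v) \<in> G \<and> (x * y, u * v) \<in> G \<and> (- x, - u) \<in> G"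
    by (elim allE)
  then show ?thesis using assms(2,3) by simp
qed

lemma emb_fun: assumes "emb K L G" "(x, u) \<in> G" shows "gf G x = u"
  unfolding gf_def
proof (rule the_equality)
  show "(x, u) \<in> G" by fact
  fix v assume "(x, v) \<in> G" then show "v = u" using emb_funD[OF assms(1) _ assms(2)] by blast
qed

lemma emb_in: assumes "emb K L G" "x \<in> Domain G" shows "(x, gf G x) \<in> G"
proof -
  obtain u where "(x, u) \<in> G" using assms(2) by blast
  then show ?thesis using emb_fun[OF assms(1)] by simp
qed

lemma emb_KD: "emb K L G \<Longrightarrow> K \<subseteq> Domain G"
  using emb_K by blast

lemma emb_gfK: "emb K L G \<Longrightarrow> k \<in> K \<Longrightarrow> gf G k = k"
  using emb_K emb_fun by metis

lemma emb_DL: "emb K L G \<Longrightarrow> Domain G \<subseteq> L"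
  using emb_sub by blast

lemma emb_gfL: "emb K L G \<Longrightarrow> x \<in> Domain G \<Longrightarrow> gf G x \<in> L"
  using emb_in[of K L G x] emb_sub[of K L G] by blast

lemma emb_rhom:
  assumes G: "emb K L G" and K: "is_subfield K"
  shows "rhom (Domain G) (gf G)"
proof
  have K0: "0 \<in> K" "1 \<in> K" using K by (auto simp: sf_0 sf_1)
  show "sring (Domain G)" unfolding sring_def
  proof (intro conjI ballI)
    show "0 \<in> Domain G" "1 \<in> Domain G" using emb_KD[OF G] K0 by auto
  next
    fix x y assume "x \<in> Domain G" "y \<in> Domain G"
    then show "x + y \<in> Domain G" "x * y \<in> Domain G" using emb_cl[OF G emb_in[OF G] emb_in[OF G]] by blast+
  next
    fix x assume "x \<in> Domain G"
    then show "- x \<in> Domain G" using emb_cl[OF G emb_in[OF G] emb_in[OF G]] by blast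
  qed
  fix x y assume xy: "x \<in> Domain G" "y \<in> Domain G"
  show "gf G (x + y) = gf G x + gf G y" "gf G (x * y) = gf G x * gf G y"
    using emb_cl[OF G emb_in[OF G xy(1)] emb_in[OF G xy(2)]] emb_fun[OF G] by blast+
next
  show "gf G 0 = 0" "gf G 1 = 1" using emb_gfK[OF G] K by (auto simp: sf_0 sf_1)
qed

lemma emb_inj0:
  assumes LK: "galois_ext L K" and G: "emb K L G" and x: "x \<in> Domain G" "gf G x = 0"
  shows "x = 0"
proof (rule ccontr)
  assume x0: "x \<noteq> 0"
  interpret rhom "Domain G" "gf G" by (rule emb_rhom[OF G gal_K[OF LK]])
  have "inverse x \<in> Domain G"
    by (rule alg_inverse[OF LK sr emb_KD[OF G] emb_DL[OF G] x(1) x0])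
  then have "gf G (x * inverse x) = 0" using t_mult x by simp
  then show False using x0 t_1 by simp
qed

lemma emb_inj:
  assumes LK: "galois_ext L K" and G: "emb K L G" and x: "x \<in> Domain G" "y \<in> Domain G" "gf G x = gf G y"
  shows "x = y"
proof -
  interpret rhom "Domain G" "gf G" by (rule emb_rhom[OF G gal_K[OF LK]])
  have "gf G (x - y) = 0" using x by (simp add: t_diff)
  then have "x - y = 0" using emb_inj0[OF LK G] x sr_diff[OF sr] by blast
  then show ?thesis by simp
qed

lemma emb_mpK:
  assumes G: "emb K L G" and K: "is_subfield K" and p: "poly_over K p"
  shows "map_poly (gf G) p = p"
proof -
  interpret rhom "Domain G" "gf G" by (rule emb_rhom[OF G K])
  show ?thesis by (rule poly_eqI) (simp add: coeff_mp emb_gfK[OF G] poly_over_coeff[OF p])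
qed


lemma ext_step:
  assumes LK: "galois_ext L K" and G: "emb K L G" and m: "ismin (Domain G) \<gamma> m"
    and \<delta>: "\<delta> \<in> L" and md: "poly (map_poly (gf G) m) \<delta> = 0" and \<gamma>: "\<gamma> \<in> L"
  shows "\<exists>G'. emb K L G' \<and> G \<subseteq> G' \<and> (\<gamma>, \<delta>) \<in> G'"
proof -
  interpret rhom "Domain G" "gf G" by (rule emb_rhom[OF G gal_K[OF LK]])
  let ?D = "Domain G" and ?t = "gf G"
  have Ls: "sring L" using sf_sring[OF gal_L[OF LK]] .
  have DL: "?D \<subseteq> L" using emb_DL[OF G] .
  have key': "poly (map_poly ?t p) \<delta> = 0" if "poly_over ?D p" "poly p \<gamma> = 0" for p
    using key[OF emb_inj0[OF LK G] m md that] .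
  define G' where "G' = {(poly p \<gamma>, poly (map_poly ?t p) \<delta>) | p. poly_over ?D p}"
  have memI: "(poly p \<gamma>, poly (map_poly ?t p) \<delta>) \<in> G'" if "poly_over ?D p" for p
    using that unfolding G'_def by blast
  have "emb K L G'" unfolding emb_def
  proof (intro conjI allI impI ballI subsetI)
    fix x u v assume "(x, u) \<in> G'" "(x, v) \<in> G'"
    then obtain p p' where p: "poly_over ?D p" "x = poly p \<gamma>" "u = poly (map_poly ?t p) \<delta>"
      and p': "poly_over ?D p'" "x = poly p' \<gamma>" "v = poly (map_poly ?t p') \<delta>"
      unfolding G'_def by blast
    have "poly (p - p') \<gamma> = 0" using p p' by simp
    then have "poly (map_poly ?t (p - p')) \<delta> = 0" using key' poly_over_diff[OF sr p(1) p'(1)] by blast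
    then show "u = v" using p p' by (simp add: mp_diff)
  next
    fix k assume k: "k \<in> K"
    then have kD: "k \<in> ?D" using emb_KD[OF G] by blast
    have "(poly [:k:] \<gamma>, poly (map_poly ?t [:k:]) \<delta>) \<in> G'" by (rule memI[OF poly_over_const[OF sr kD]])
    then show "(k, k) \<in> G'" using emb_gfK[OF G k] by (simp add: mp_const)
  next
    fix z assume "z \<in> G'"
    then obtain p where p: "poly_over ?D p" "z = (poly p \<gamma>, poly (map_poly ?t p) \<delta>)"
      unfolding G'_def by blast
    have "poly_over L p" using poly_over_mono[OF p(1) DL] .
    moreover have "poly_over L (map_poly ?t p)"
      unfolding poly_over_def using p(1) by (simp add: coeff_mp emb_gfL[OF G] poly_over_def)
    ultimately show "z \<in> L \<times> L" using p(2) poly_over_poly[OF Ls] \<gamma> \<delta> by auto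
  next
    fix x u y v assume "(x, u) \<in> G'" "(y, v) \<in> G'"
    then obtain p p' where p: "poly_over ?D p" "x = poly p \<gamma>" "u = poly (map_poly ?t p) \<delta>"
      and p': "poly_over ?D p'" "y = poly p' \<gamma>" "v = poly (map_poly ?t p') \<delta>"
      unfolding G'_def by blast
    show "(x + y, u + v) \<in> G'"
      using memI[OF poly_over_add[OF sr p(1) p'(1)]] p p' by (simp add: mp_add)
    show "(x * y, u * v) \<in> G'"
      using memI[OF poly_over_mult[OF sr p(1) p'(1)]] p p' by (simp add: mp_mult)
    show "(- x, - u) \<in> G'"
      using memI[OF poly_over_uminus[OF sr p(1)]] p by (simp add: mp_uminus)
  qed
  moreover have "G \<subseteq> G'"
  proof
    fix z assume z: "z \<in> G"
    then obtain x u where xu: "z = (x, u)" by (cases z)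
    then have xD: "x \<in> ?D" using z by blast
    have u: "u = ?t x" using emb_fun[OF G] z xu by auto
    have "(poly [:x:] \<gamma>, poly (map_poly ?t [:x:]) \<delta>) \<in> G'" by (rule memI[OF poly_over_const[OF sr xD]])
    then show "z \<in> G'" using xu u by (simp add: mp_const)
  qed
  moreover have "(\<gamma>, \<delta>) \<in> G'"
  proof -
    have po: "poly_over ?D [:0, 1:]" using sr by (simp add: poly_over_pCons sr_0 sr_1 poly_over_0)
    have "map_poly ?t [:0, 1:] = [:0, 1:]" by (simp add: map_poly_pCons t_0 t_1)
    then show ?thesis using memI[OF po] by simp
  qed
  ultimately show ?thesis by blast
qed

lemma ext_root:
  assumes LK: "galois_ext L K" and G: "emb K L G" and m: "ismin (Domain G) \<gamma> m" and \<gamma>: "\<gamma> \<in> L"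
  shows "\<exists>\<delta>\<in>L. poly (map_poly (gf G) m) \<delta> = 0"
proof -
  interpret rhom "Domain G" "gf G" by (rule emb_rhom[OF G gal_K[OF LK]])
  have inj0: "\<And>x. x \<in> Domain G \<Longrightarrow> gf G x = 0 \<Longrightarrow> x = 0" using emb_inj0[OF LK G] by blast
  have mD: "poly_over (Domain G) m" using m by (simp add: ismin_def)
  have "degree (map_poly (gf G) m) \<ge> 1" using mp_lead[OF inj0 mD] ismin_degree[OF m] by simp
  then obtain \<delta> where d: "poly (map_poly (gf G) m) \<delta> = 0" using fta_deg by blast
  obtain p0 where p0: "p0 \<noteq> 0" "poly_over K p0" "poly p0 \<gamma> = 0" using gal_alg[OF LK \<gamma>] by blast
  obtain M where M: "ismin K \<gamma> M" using minpoly_ex[OF p0(2,1,3)] by blast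
  have MK: "poly_over K M" "M \<noteq> 0" "poly M \<gamma> = 0" using M by (auto simp: ismin_def)
  have "poly (map_poly (gf G) M) \<delta> = 0"
    using key[OF inj0 m d poly_over_mono[OF MK(1) emb_KD[OF G]] MK(3)] .
  then have Md: "poly M \<delta> = 0" using emb_mpK[OF G gal_K[OF LK] MK(1)] by simp
  have "splits_in L M"
    using gal_normal[OF LK ismin_irred[OF sf_sring[OF gal_K[OF LK]] M] \<gamma> MK(3)] .
  then have "\<delta> \<in> L" using splits_root MK(2) Md by blast
  then show ?thesis using d by blast
qed

lemma exists_max:
  assumes LK: "galois_ext L K" and G0: "emb K L G0"
  shows "\<exists>M. emb K L M \<and> G0 \<subseteq> M \<and> Domain M = L"
proof -
  define A where "A = {G. emb K L G \<and> G0 \<subseteq> G}"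
  have "\<exists>M\<in>A. \<forall>X\<in>A. M \<subseteq> X \<longrightarrow> X = M"
  proof (rule Zorn_Lemma2, intro ballI)
    fix C assume C: "C \<in> chains A"
    then have CA: "C \<subseteq> A" and ch: "\<And>X Y. X \<in> C \<Longrightarrow> Y \<in> C \<Longrightarrow> X \<subseteq> Y \<or> Y \<subseteq> X"
      unfolding chains_def chain_subset_def by blast+
    show "\<exists>U\<in>A. \<forall>X\<in>C. X \<subseteq> U"
    proof (cases "C = {}")
      case True
      then show ?thesis using G0 unfolding A_def by blast
    next
      case False
      then obtain X0 where X0: "X0 \<in> C" by blast
      have embX: "emb K L X" if "X \<in> C" for X using CA that unfolding A_def by blast
      have "emb K L (\<Union>C)" unfolding emb_def
      proof (intro conjI allI impI ballI subsetI)
        fix x u v assume "(x, u) \<in> \<Union>C" "(x, v) \<in> \<Union>C"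
        then obtain X Y where "X \<in> C" "Y \<in> C" "(x, u) \<in> X" "(x, v) \<in> Y" by blast
        then show "u = v" using ch[of X Y] embX emb_funD by blast
      next
        fix k assume "k \<in> K" then show "(k, k) \<in> \<Union>C" using emb_K[OF embX[OF X0]] X0 by blast
      next
        fix z assume "z \<in> \<Union>C" then show "z \<in> L \<times> L" using embX emb_sub by blast
      next
        fix x u y v assume "(x, u) \<in> \<Union>C" "(y, v) \<in> \<Union>C"
        then obtain X Y where XY: "X \<in> C" "Y \<in> C" "(x, u) \<in> X" "(y, v) \<in> Y" by blast
        then obtain Z where Z: "Z \<in> C" "(x, u) \<in> Z" "(y, v) \<in> Z" using ch[of X Y] by blast
        have "(x + y, u + v) \<in> Z \<and> (x * y, u * v) \<in> Z \<and> (- x, - u) \<in> Z"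
          by (rule emb_cl[OF embX[OF Z(1)] Z(2,3)])
        then show "(x + y, u + v) \<in> \<Union>C" "(x * y, u * v) \<in> \<Union>C" "(- x, - u) \<in> \<Union>C"
          using Z(1) by blast+
      qed
      moreover have "G0 \<subseteq> \<Union>C" using X0 CA unfolding A_def by blast
      ultimately show ?thesis unfolding A_def by blast
    qed
  qed
  then obtain M where MA: "M \<in> A" and mx: "\<forall>X\<in>A. M \<subseteq> X \<longrightarrow> X = M" by blast
  have M: "emb K L M" "G0 \<subseteq> M" using MA unfolding A_def by auto
  have max: "X = M" if "emb K L X" "G0 \<subseteq> X" "M \<subseteq> X" for X
    using mx that unfolding A_def by blast
  have "Domain M = L"
  proof (rule ccontr)
    assume "Domain M \<noteq> L"
    then obtain \<gamma> where \<gamma>: "\<gamma> \<in> L" "\<gamma> \<notin> Domain M" using emb_DL[OF M(1)] by blast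
    obtain p0 where p0: "p0 \<noteq> 0" "poly_over K p0" "poly p0 \<gamma> = 0" using gal_alg[OF LK \<gamma>(1)] by blast
    obtain m where m: "ismin (Domain M) \<gamma> m"
      using minpoly_ex[OF poly_over_mono[OF p0(2) emb_KD[OF M(1)]] p0(1,3)] by blast
    obtain \<delta> where \<delta>: "\<delta> \<in> L" "poly (map_poly (gf M) m) \<delta> = 0" using ext_root[OF LK M(1) m \<gamma>(1)] by blast
    obtain G' where G': "emb K L G'" "M \<subseteq> G'" "(\<gamma>, \<delta>) \<in> G'"
      using ext_step[OF LK M(1) m \<delta> \<gamma>(1)] by blast
    have "G' = M" using max[OF G'(1)] G'(2) M(2) by blast
    then show False using G'(3) \<gamma>(2) by blast
  qed
  then show ?thesis using M by blast
qed

lemma max_gal: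
  assumes LK: "galois_ext L K" and M: "emb K L M" and D: "Domain M = L"
  shows "gf M \<in> Gal L K"
proof -
  interpret rhom "Domain M" "gf M" by (rule emb_rhom[OF M gal_K[OF LK]])
  have inj: "inj_on (gf M) L" using emb_inj[OF LK M] D by (auto simp: inj_on_def)
  have into: "gf M ` L \<subseteq> L" using emb_gfL[OF M] D by blast
  have onto: "L \<subseteq> gf M ` L"
  proof
    fix y assume y: "y \<in> L"
    obtain p0 where p0: "p0 \<noteq> 0" "poly_over K p0" "poly p0 y = 0" using gal_alg[OF LK y] by blast
    define R where "R = {r. poly p0 r = 0} \<inter> L"
    have fin: "finite R" unfolding R_def using poly_roots_finite[OF p0(1)] by blast
    have mp: "map_poly (gf M) p0 = p0" using emb_mpK[OF M gal_K[OF LK] p0(2)] .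
    have RR: "gf M ` R \<subseteq> R"
    proof
      fix z assume "z \<in> gf M ` R"
      then obtain r where r: "r \<in> R" "z = gf M r" by blast
      have rD: "r \<in> Domain M" using r D unfolding R_def by blast
      have "gf M (poly p0 r) = poly p0 (gf M r)"
        using mp_poly[OF poly_over_mono[OF p0(2) emb_KD[OF M]] rD] mp by simp
      then have "poly p0 z = 0" using r t_0 unfolding R_def by simp
      then show "z \<in> R" using into r rD D unfolding R_def by blast
    qed
    have "gf M ` R = R" by (rule endo_inj_surj[OF fin RR inj_on_subset[OF inj]]) (auto simp: R_def)
    moreover have "y \<in> R" using y p0 unfolding R_def by blast
    ultimately show "y \<in> gf M ` L" unfolding R_def by blast
  qed
  have "bij_betw (gf M) L L" using inj into onto by (auto simp: bij_betw_def)
  moreover have "\<forall>x\<in>L. \<forall>y\<in>L. gf M (x + y) = gf M x + gf M y \<and> gf M (x * y) = gf M x * gf M y"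
    using t_add t_mult D by blast
  moreover have "\<forall>x\<in>K. gf M x = x" using emb_gfK[OF M] by blast
  ultimately show ?thesis unfolding Gal_def by blast
qed

lemma emb_id:
  assumes LK: "galois_ext L K"
  shows "emb K L {(k, k) | k. k \<in> K}" (is "emb K L ?G")
  unfolding emb_def
proof (intro conjI allI impI ballI subsetI)
  fix z assume "z \<in> ?G" then show "z \<in> L \<times> L" using gal_KL[OF LK] by blast
next
  fix x u y v assume "(x, u) \<in> ?G" "(y, v) \<in> ?G"
  then have "x \<in> K" "y \<in> K" "u = x" "v = y" by auto
  then show "(x + y, u + v) \<in> ?G" "(x * y, u * v) \<in> ?G" "(- x, - u) \<in> ?G"
    using gal_K[OF LK] by (auto intro: sf_add sf_mult sf_uminus)
qed auto

lemma other_root: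
  assumes LK: "galois_ext L K" and m: "ismin K \<alpha> m" and \<alpha>: "\<alpha> \<in> L" "\<alpha> \<notin> K"
  shows "\<exists>\<beta>\<in>L. poly m \<beta> = 0 \<and> \<beta> \<noteq> \<alpha>"
proof (rule ccontr)
  assume no: "\<not> ?thesis"
  have K: "is_subfield K" using gal_K[OF LK] .
  have mK: "poly_over K m" "m \<noteq> 0" "poly m \<alpha> = 0" using m by (auto simp: ismin_def)
  have "splits_in L m" using gal_normal[OF LK ismin_irred[OF sf_sring[OF K] m] \<alpha>(1) mK(3)] .
  then obtain c rs where rs: "set rs \<subseteq> L" "m = smult c (prod_list (map (\<lambda>r. [:- r, 1:]) rs))"
    unfolding splits_in_def by blast
  have c: "c \<noteq> 0" using rs mK(2) by auto
  have allr: "r = \<alpha>" if "r \<in> set rs" for r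
  proof -
    have "poly (prod_list (map (\<lambda>r. [:- r, 1:]) rs)) r = 0"
      using that by (induction rs) auto
    then have "poly m r = 0" using rs(2) by simp
    then show ?thesis using no rs(1) that by blast
  qed
  then have "map (\<lambda>r. [:- r, 1:]) rs = replicate (length rs) [:- \<alpha>, 1:]"
    by (induction rs) auto
  then have m_eq: "m = smult c ([:- \<alpha>, 1:] ^ length rs)" using rs(2) by (simp add: prod_list_replicate)
  have dm: "degree m = length rs" using m_eq c by (simp add: degree_linear_power)
  have d1: "degree m \<ge> 1" using ismin_degree[OF m] .
  have d2: "degree m \<noteq> 1"
  proof
    assume d: "degree m = 1"
    have "poly m \<alpha> = (\<Sum>i\<le>1. Polynomial.coeff m i * \<alpha> ^ i)" using d by (simp add: poly_altdef)
    then have e: "Polynomial.coeff m 0 + Polynomial.coeff m 1 * \<alpha> = 0" using mK(3) by simp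
    have c1: "Polynomial.coeff m 1 \<noteq> 0" using d mK(2) by (metis leading_coeff_0_iff)
    have e2: "\<alpha> * Polynomial.coeff m 1 = - Polynomial.coeff m 0"
      using e by (simp add: eq_neg_iff_add_eq_0 add.commute mult.commute)
    have "\<alpha> = (\<alpha> * Polynomial.coeff m 1) / Polynomial.coeff m 1" using c1 by simp
    also have "\<dots> = - Polynomial.coeff m 0 / Polynomial.coeff m 1" using e2 by simp
    finally have "\<alpha> = - Polynomial.coeff m 0 / Polynomial.coeff m 1" .
    moreover have "- Polynomial.coeff m 0 / Polynomial.coeff m 1 \<in> K"
      using K mK(1) by (simp add: sf_divide sf_uminus poly_over_coeff)
    ultimately show False using \<alpha>(2) by simp
  qed
  define j where "j = length rs - 2"
  have j: "length rs = Suc (Suc j)" using dm d1 d2 unfolding j_def by simp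
  have "pderiv m = smult c (smult (of_nat (Suc (Suc j))) ([:- \<alpha>, 1:] ^ Suc j) * pderiv [:- \<alpha>, 1:])"
    using m_eq j by (simp only: pderiv_smult pderiv_power_Suc)
  then have pd: "poly (pderiv m) \<alpha> = 0" by simp
  have pK: "poly_over K (pderiv m)" using poly_over_pderiv[OF sf_sring[OF K] mK(1)] .
  have pnz: "pderiv m \<noteq> 0" using d1 by (simp add: pderiv_eq_0_iff)
  have "degree m \<le> degree (pderiv m)" using m pK pnz pd unfolding ismin_def by blast
  then show False using degree_pderiv[of m] d1 by simp
qed

theorem fixed_field:
  assumes LK: "galois_ext L K" and \<alpha>: "\<alpha> \<in> L" and fx: "\<forall>\<sigma>\<in>Gal L K. \<sigma> \<alpha> = \<alpha>"
  shows "\<alpha> \<in> K"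
proof (rule ccontr)
  assume nK: "\<alpha> \<notin> K"
  let ?G = "{(k, k) | k. k \<in> K}"
  have G: "emb K L ?G" by (rule emb_id[OF LK])
  have DG: "Domain ?G = K" by auto
  obtain p0 where p0: "p0 \<noteq> 0" "poly_over K p0" "poly p0 \<alpha> = 0" using gal_alg[OF LK \<alpha>] by blast
  obtain m where m: "ismin K \<alpha> m" using minpoly_ex[OF p0(2,1,3)] by blast
  obtain \<beta> where \<beta>: "\<beta> \<in> L" "poly m \<beta> = 0" "\<beta> \<noteq> \<alpha>" using other_root[OF LK m \<alpha> nK] by blast
  have mm: "map_poly (gf ?G) m = m" using emb_mpK[OF G gal_K[OF LK]] m by (simp add: ismin_def)
  have m': "ismin (Domain ?G) \<alpha> m" using m DG by simp
  have mb: "poly (map_poly (gf ?G) m) \<beta> = 0" using mm \<beta>(2) by simp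
  obtain G0 where G0: "emb K L G0" "(\<alpha>, \<beta>) \<in> G0"
    using ext_step[OF LK G m' \<beta>(1) mb \<alpha>] by blast
  obtain M where M: "emb K L M" "G0 \<subseteq> M" "Domain M = L" using exists_max[OF LK G0(1)] by blast
  have "gf M \<in> Gal L K" using max_gal[OF LK M(1,3)] .
  moreover have "gf M \<alpha> = \<beta>" using emb_fun[OF M(1)] G0(2) M(2) by blast
  ultimately show False using fx \<beta>(3) by auto
qed


lemma my_euler:
  fixes c q :: nat
  assumes q: "q > 1" and cop: "coprime c q"
  shows "[c ^ totient q = 1] (mod q)"
proof -
  define U where "U = totatives q"
  define \<phi> where "\<phi> x = (c * x) mod q" for x
  have finU: "finite U" unfolding U_def by simp
  have mapU: "\<phi> x \<in> U" if "x \<in> U" for x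
  proof -
    have x: "coprime x q" using that unfolding U_def by (simp add: in_totatives_iff)
    have "coprime (c * x) q" using x cop by simp
    then have cp: "coprime (\<phi> x) q" unfolding \<phi>_def using q by simp
    have "\<phi> x < q" unfolding \<phi>_def using q by simp
    moreover have "\<phi> x \<noteq> 0"
    proof
      assume "\<phi> x = 0"
      then have "coprime 0 q" using cp by simp
      then show False using q by simp
    qed
    ultimately show ?thesis unfolding U_def using cp by (simp add: in_totatives_iff)
  qed
  have lt: "x < q" if "x \<in> U" for x
  proof -
    have "x \<le> q" "coprime x q" using that unfolding U_def by (auto simp: in_totatives_iff)
    moreover have "x \<noteq> q" using q calculation(2) by auto
    ultimately show ?thesis by simp
  qed
  have inj: "inj_on \<phi> U"
  proof
    fix x y assume xy: "x \<in> U" "y \<in> U" "\<phi> x = \<phi> y"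
    then have "[c * x = c * y] (mod q)" unfolding \<phi>_def cong_def by simp
    then have "[x = y] (mod q)" using cong_mult_lcancel_nat[of c q x y] cop by simp
    then show "x = y" using lt xy by (simp add: cong_less_modulus_unique_nat)
  qed
  have img: "\<phi> ` U = U" by (rule endo_inj_surj[OF finU _ inj]) (use mapU in auto)
  have "prod (\<lambda>x. x) U = prod (\<lambda>x. x) (\<phi> ` U)" using img by simp
  also have "\<dots> = prod \<phi> U" using prod.reindex[OF inj, of "\<lambda>x. x"] by simp
  finally have e1: "prod (\<lambda>x. x) U = prod \<phi> U" .
  have "[prod \<phi> U = prod (\<lambda>x. c * x) U] (mod q)"
    by (rule cong_prod) (simp add: \<phi>_def cong_def)
  also have "prod (\<lambda>x. c * x) U = c ^ card U * prod (\<lambda>x. x) U"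
    by (simp add: prod.distrib)
  finally have "[1 * prod (\<lambda>x. x) U = c ^ card U * prod (\<lambda>x. x) U] (mod q)" using e1 by simp
  moreover have "coprime (prod (\<lambda>x. x) U) q"
    by (rule prod_coprime_left) (simp add: U_def in_totatives_iff)
  ultimately have "[1 = c ^ card U] (mod q)" using cong_mult_rcancel_nat by blast
  then show ?thesis unfolding U_def totient_def by (simp add: cong_sym)
qed

lemma pow_gcd_cong:
  fixes c q N M :: nat
  assumes "[c ^ N = 1] (mod q)" "[c ^ M = 1] (mod q)" "M > 0"
  shows "[c ^ gcd M N = 1] (mod q)"
proof -
  obtain x y where xy: "M * x = N * y + gcd M N" using bezout_nat[of M N] assms(3) by auto
  have "[c ^ (M * x) = 1] (mod q)" using cong_pow[OF assms(2), of x] by (simp add: power_mult)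
  moreover have "c ^ (M * x) = (c ^ N) ^ y * c ^ gcd M N" by (simp add: xy power_add power_mult)
  moreover have "[(c ^ N) ^ y * c ^ gcd M N = 1 * c ^ gcd M N] (mod q)"
    using cong_scalar_right[OF cong_pow[OF assms(1), of y], of "c ^ gcd M N"] by simp
  ultimately show ?thesis by (metis cong_sym cong_trans mult_1)
qed

lemma nt_main:
  fixes c q N p k :: nat
  assumes p: "prime p" "q = p ^ k" "k \<ge> 1" and odd: "odd q" and cop: "coprime c q"
    and cN: "[c ^ N = 1] (mod q)" and g: "gcd (totient q) N \<le> 2"
  shows "c mod q = 1 \<or> c mod q = q - 1"
    and "gcd (totient q) N = 1 \<Longrightarrow> c mod q = 1"
proof -
  have p2: "p \<ge> 2" using p(1) by (simp add: prime_ge_2_nat)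
  have "p ^ 1 \<le> p ^ k" using p(3) p2 by (intro power_increasing) auto
  then have q1: "q > 1" using p(2) p2 by simp
  have tq: "totient q > 0" using q1 by simp
  have e: "[c ^ totient q = 1] (mod q)" using my_euler[OF q1 cop] .
  have cg: "[c ^ gcd (totient q) N = 1] (mod q)" using pow_gcd_cong[OF cN e tq] .
  have g1: "gcd (totient q) N \<ge> 1" using tq by (simp add: Suc_le_eq)
  show "gcd (totient q) N = 1 \<Longrightarrow> c mod q = 1" using cg q1 by (simp add: cong_def)
  have c2: "[c ^ 2 = 1] (mod q)"
  proof (cases "gcd (totient q) N = 1")
    case True
    then have "[c = 1] (mod q)" using cg by simp
    then show ?thesis using cong_pow[of c 1 q 2] by simp
  next
    case False
    then have "gcd (totient q) N = 2" using g g1 by simp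
    then show ?thesis using cg by simp
  qed
  define r where "r = c mod q"
  have rq: "r < q" unfolding r_def using q1 by simp
  have r0: "r \<noteq> 0"
  proof
    assume "r = 0"
    then have "q dvd c" unfolding r_def by auto
    then have "is_unit q" using coprime_common_divisor[OF cop] by simp
    then show False using q1 by simp
  qed
  have "[r ^ 2 = 1] (mod q)" using c2 unfolding r_def cong_def by (simp add: power_mod)
  then have "[int (r ^ 2) = int 1] (mod int q)" by (simp only: cong_int_iff)
  then have "int q dvd int (r ^ 2) - 1" by (simp add: cong_iff_dvd_diff)
  then have dv: "int q dvd (int r - 1) * (int r + 1)" by (simp add: power2_eq_square algebra_simps)
  show "c mod q = 1 \<or> c mod q = q - 1"
  proof (cases "int p dvd int r - 1")
    case True
    have "\<not> int p dvd int r + 1"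
    proof
      assume "int p dvd int r + 1"
      with True have "int p dvd 2" using dvd_diff[of "int p" "int r + 1" "int r - 1"] by simp
      then have "int p dvd int 2" by simp
      then have "p dvd 2" by (simp only: of_nat_dvd_iff)
      then have "p \<le> 2" by (rule dvd_imp_le) simp
      then have "p = 2" using p2 by simp
      then show False using odd p(2,3) by (simp add: Suc_le_eq)
    qed
    then have "coprime (int p) (int r + 1)" using p(1) by (intro prime_imp_coprime) auto
    then have "coprime (int q) (int r + 1)" using p(2) by simp
    then have "int q dvd int r - 1" using dv coprime_dvd_mult_left_iff by blast
    moreover have "0 \<le> int r - 1" "int r - 1 < int q" using r0 rq by auto
    ultimately have "int r - 1 = 0" using zdvd_not_zless[of "int r - 1" "int q"] by fastforce
    then show ?thesis unfolding r_def by simp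
  next
    case False
    then have "coprime (int p) (int r - 1)" using p(1) by (intro prime_imp_coprime) auto
    then have "coprime (int q) (int r - 1)" using p(2) by simp
    then have "int q dvd int r + 1" using dv coprime_dvd_mult_right_iff by blast
    moreover have "0 < int r + 1" "int r + 1 \<le> int q" using r0 rq by auto
    ultimately have "int r + 1 = int q" using zdvd_imp_le[of "int q" "int r + 1"] by linarith
    then have "r = q - 1" by linarith
    then show ?thesis unfolding r_def by simp
  qed
qed

lemma mod_double_zero:
  fixes j q :: nat
  assumes "j < q" "(j + j) mod q = j"
  shows "j = 0"
proof (cases "j + j < q")
  case True
  then show ?thesis using assms by simp
next
  case False
  then have "(j + j) mod q = j + j - q" using assms(1) by (simp add: mod_if)
  then show ?thesis using assms by simp
qed

lemma cyc_aut:
  fixes f :: "nat \<Rightarrow> 'a" and h :: "'a \<Rightarrow> 'a" and add :: "'a \<Rightarrow> 'a \<Rightarrow> 'a"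
  assumes q1: "q > 1" and f: "bij_betw f {0..<q} S"
    and fadd: "\<forall>i<q. \<forall>j<q. f ((i + j) mod q) = add (f i) (f j)"
    and hS: "h ` S \<subseteq> S" and hinj: "inj_on h S" and hadd: "\<forall>P\<in>S. \<forall>Q\<in>S. h (add P Q) = add (h P) (h Q)"
  shows "\<exists>c. coprime c q \<and> (\<forall>i<q. h (f i) = f ((c * i) mod q))"
proof -
  have Sf: "S = f ` {0..<q}" using f by (simp add: bij_betw_def)
  have finj: "i = j" if "i < q" "j < q" "f i = f j" for i j
    using f that unfolding bij_betw_def inj_on_def by auto
  have fi: "f i \<in> S" if "i < q" for i using Sf that by auto
  have ex: "\<exists>j. j < q \<and> f j = h (f i)" if "i < q" for i
  proof -
    have "h (f i) \<in> S" using hS fi[OF that] by blast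
    then show ?thesis using Sf by auto
  qed
  define g where "g i = (SOME j. j < q \<and> f j = h (f i))" for i
  have gq: "g i < q \<and> f (g i) = h (f i)" if "i < q" for i
    unfolding g_def using someI_ex[OF ex[OF that]] .
  have gadd: "g ((i + j) mod q) = (g i + g j) mod q" if "i < q" "j < q" for i j
  proof (rule finj)
    show "g ((i + j) mod q) < q" using gq q1 by simp
    show "(g i + g j) mod q < q" using q1 by simp
    have "f (g ((i + j) mod q)) = h (f ((i + j) mod q))" using gq q1 by simp
    also have "\<dots> = h (add (f i) (f j))" using fadd that by simp
    also have "\<dots> = add (h (f i)) (h (f j))" using hadd fi that by simp
    also have "\<dots> = add (f (g i)) (f (g j))" using gq that by simp
    also have "\<dots> = f ((g i + g j) mod q)" using fadd gq that by simp
    finally show "f (g ((i + j) mod q)) = f ((g i + g j) mod q)" .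
  qed
  define c where "c = g 1"
  have gi: "i < q \<Longrightarrow> g i = (c * i) mod q" for i
  proof (induction i)
    case 0
    have "g 0 = (g 0 + g 0) mod q" using gadd[of 0 0] q1 by simp
    then show ?case using mod_double_zero[of "g 0" q] gq[of 0] q1 by simp
  next
    case (Suc i)
    have "g (Suc i) = g ((i + 1) mod q)" using Suc.prems by simp
    also have "\<dots> = (g i + g 1) mod q" using gadd[of i 1] Suc.prems q1 by simp
    also have "\<dots> = ((c * i) mod q + c) mod q" using Suc c_def by simp
    also have "\<dots> = (c * Suc i) mod q" by (simp add: mod_add_right_eq mod_add_left_eq add.commute)
    finally show ?case .
  qed
  have hf: "\<forall>i<q. h (f i) = f ((c * i) mod q)" using gq gi by simp
  have finS: "finite S" using Sf by simp
  have "h ` S = S" by (rule endo_inj_surj[OF finS hS hinj])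
  then obtain P where P: "P \<in> S" "h P = f 1" using fi[OF q1] by (metis imageE)
  then obtain i where i: "i < q" "P = f i" using Sf by auto
  have "f ((c * i) mod q) = f 1" using hf i P by simp
  then have ci: "(c * i) mod q = 1" using finj q1 by simp
  have "coprime c q"
  proof (rule coprimeI)
    fix d assume "d dvd c" "d dvd q"
    then have "d dvd (c * i) mod q" by (simp add: dvd_mod)
    then show "is_unit d" using ci by simp
  qed
  then show ?thesis using hf by blast
qed

lemma cyc_iter:
  fixes f :: "nat \<Rightarrow> 'a" and h :: "'a \<Rightarrow> 'a"
  assumes hf: "\<forall>i<q. h (f i) = f ((c * i) mod q)" and i: "i < q"
  shows "(h ^^ n) (f i) = f ((c ^ n * i) mod q)"
proof (induction n)
  case 0
  then show ?case using i by simp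
next
  case (Suc n)
  have "(h ^^ Suc n) (f i) = h (f ((c ^ n * i) mod q))" using Suc by simp
  also have "\<dots> = f ((c * ((c ^ n * i) mod q)) mod q)" using hf i by simp
  also have "\<dots> = f ((c ^ Suc n * i) mod q)" by (simp add: mod_mult_right_eq mult.assoc)
  finally show ?case .
qed


locale galaut =
  fixes L K :: "complex set" and \<sigma> :: "complex \<Rightarrow> complex"
  assumes LK: "galois_ext L K" and sg: "\<sigma> \<in> Gal L K"
begin

lemma Lsf: "is_subfield L" using gal_L[OF LK] .
lemma KL: "K \<subseteq> L" using gal_KL[OF LK] .
lemma Ksf: "is_subfield K" using gal_K[OF LK] .

lemma Lc[simp]:
  "0 \<in> L" "1 \<in> L" "numeral n \<in> L"
  "x \<in> L \<Longrightarrow> y \<in> L \<Longrightarrow> x + y \<in> L"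
  "x \<in> L \<Longrightarrow> y \<in> L \<Longrightarrow> x * y \<in> L"
  "x \<in> L \<Longrightarrow> y \<in> L \<Longrightarrow> x - y \<in> L"
  "x \<in> L \<Longrightarrow> y \<in> L \<Longrightarrow> x / y \<in> L"
  "x \<in> L \<Longrightarrow> - x \<in> L"
  "x \<in> L \<Longrightarrow> inverse x \<in> L"
  "x \<in> L \<Longrightarrow> x ^ m \<in> L"
  using Lsf by (auto intro: sf_closed)

lemma s_L[simp]: "x \<in> L \<Longrightarrow> \<sigma> x \<in> L"
  using sg unfolding Gal_def bij_betw_def by blast
lemma s_inj: "x \<in> L \<Longrightarrow> y \<in> L \<Longrightarrow> \<sigma> x = \<sigma> y \<longleftrightarrow> x = y"
  using sg unfolding Gal_def bij_betw_def inj_on_def by blast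
lemma s_add[simp]: "x \<in> L \<Longrightarrow> y \<in> L \<Longrightarrow> \<sigma> (x + y) = \<sigma> x + \<sigma> y"
  using sg unfolding Gal_def by blast
lemma s_mult[simp]: "x \<in> L \<Longrightarrow> y \<in> L \<Longrightarrow> \<sigma> (x * y) = \<sigma> x * \<sigma> y"
  using sg unfolding Gal_def by blast
lemma s_K: "x \<in> K \<Longrightarrow> \<sigma> x = x"
  using sg unfolding Gal_def by blast
lemma s_0[simp]: "\<sigma> 0 = 0" using s_K sf_0[OF Ksf] by blast
lemma s_1[simp]: "\<sigma> 1 = 1" using s_K sf_1[OF Ksf] by blast
lemma s_numeral[simp]: "\<sigma> (numeral n) = numeral n" using s_K sf_numeral[OF Ksf] by blast
lemma s_uminus[simp]: "x \<in> L \<Longrightarrow> \<sigma> (- x) = - \<sigma> x"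
  using s_add[of x "- x"] by (simp add: eq_neg_iff_add_eq_0 add.commute)
lemma s_diff[simp]: "x \<in> L \<Longrightarrow> y \<in> L \<Longrightarrow> \<sigma> (x - y) = \<sigma> x - \<sigma> y"
  using s_add[of x "- y"] by simp
lemma s_inverse[simp]: "x \<in> L \<Longrightarrow> \<sigma> (inverse x) = inverse (\<sigma> x)"
proof (cases "x = 0")
  case False
  assume x: "x \<in> L"
  have "\<sigma> x * \<sigma> (inverse x) = 1" using s_mult[of x "inverse x"] x False by simp
  then show ?thesis by (metis inverse_unique)
qed simp
lemma s_divide[simp]: "x \<in> L \<Longrightarrow> y \<in> L \<Longrightarrow> \<sigma> (x / y) = \<sigma> x / \<sigma> y"
  by (simp add: divide_inverse)
lemma s_power[simp]: "x \<in> L \<Longrightarrow> \<sigma> (x ^ n) = \<sigma> x ^ n"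
  by (induction n) simp_all
lemma s_zero_iff[simp]: "x \<in> L \<Longrightarrow> \<sigma> x = 0 \<longleftrightarrow> x = 0"
  using s_inj[of x 0] by simp

end

definition emap :: "(complex \<Rightarrow> complex) \<Rightarrow> ecpt \<Rightarrow> ecpt" where
  "emap s P = (case P of Inf \<Rightarrow> Inf | Aff x y \<Rightarrow> Aff (s x) (s y))"

definition inL :: "complex set \<Rightarrow> ecpt \<Rightarrow> bool" where
  "inL F P = (case P of Inf \<Rightarrow> True | Aff x y \<Rightarrow> x \<in> F \<and> y \<in> F)"

lemma emap_simps[simp]: "emap s Inf = Inf" "emap s (Aff x y) = Aff (s x) (s y)"
  by (simp_all add: emap_def)
lemma inL_simps[simp]: "inL F Inf" "inL F (Aff x y) \<longleftrightarrow> x \<in> F \<and> y \<in> F"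
  by (simp_all add: inL_def)

lemma ec_add_aff:
  "ec_add a b (Aff x1 y1) (Aff x2 y2) =
    (if x1 = x2 \<and> y1 = - y2 then Inf else
      Aff ((if x1 = x2 then (3 * x1 ^ 2 + a) / (2 * y1) else (y2 - y1) / (x2 - x1)) ^ 2 - x1 - x2)
          ((if x1 = x2 then (3 * x1 ^ 2 + a) / (2 * y1) else (y2 - y1) / (x2 - x1)) *
             (x1 - ((if x1 = x2 then (3 * x1 ^ 2 + a) / (2 * y1) else (y2 - y1) / (x2 - x1)) ^ 2 - x1 - x2)) - y1))"
  by (simp add: Let_def)

context galaut
begin

lemma ec_add_inL:
  assumes a: "a \<in> L" and P: "inL L P" and Q: "inL L Q"
  shows "inL L (ec_add a b P Q)"
proof (cases P)
  case (Aff x1 y1)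
  note P' = Aff
  show ?thesis
  proof (cases Q)
    case (Aff x2 y2)
    have m: "x1 \<in> L" "y1 \<in> L" "x2 \<in> L" "y2 \<in> L" using P Q P' Aff by auto
    define l where "l = (if x1 = x2 then (3 * x1 ^ 2 + a) / (2 * y1) else (y2 - y1) / (x2 - x1))"
    have l: "l \<in> L" unfolding l_def using m a by simp
    show ?thesis unfolding P' Aff ec_add_aff l_def[symmetric] using l m by simp
  qed (use P P' in simp)
qed (use Q in simp)

lemma emap_add:
  assumes a: "a \<in> K" and P: "inL L P" and Q: "inL L Q"
  shows "emap \<sigma> (ec_add a b P Q) = ec_add a b (emap \<sigma> P) (emap \<sigma> Q)"
proof (cases P)
  case (Aff x1 y1)
  note P' = Aff
  show ?thesis
  proof (cases Q)
    case (Aff x2 y2)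
    have m: "x1 \<in> L" "y1 \<in> L" "x2 \<in> L" "y2 \<in> L" using P Q P' Aff by auto
    have aL: "a \<in> L" using a KL by blast
    have sa: "\<sigma> a = a" using s_K a by blast
    have c1: "(\<sigma> x1 = \<sigma> x2) = (x1 = x2)" using s_inj m by blast
    have c2: "(\<sigma> y1 = - \<sigma> y2) = (y1 = - y2)" using s_inj[of y1 "- y2"] m by simp
    define l where "l = (if x1 = x2 then (3 * x1 ^ 2 + a) / (2 * y1) else (y2 - y1) / (x2 - x1))"
    define l' where "l' = (if \<sigma> x1 = \<sigma> x2 then (3 * \<sigma> x1 ^ 2 + a) / (2 * \<sigma> y1) else (\<sigma> y2 - \<sigma> y1) / (\<sigma> x2 - \<sigma> x1))"
    have l: "l \<in> L" unfolding l_def using m aL by simp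
    have sl: "\<sigma> l = l'" unfolding l_def l'_def c1 using m aL sa by simp
    have E1: "ec_add a b (Aff x1 y1) (Aff x2 y2) = (if x1 = x2 \<and> y1 = - y2 then Inf else
        Aff (l ^ 2 - x1 - x2) (l * (x1 - (l ^ 2 - x1 - x2)) - y1))"
      by (simp only: ec_add_aff l_def)
    have E2: "ec_add a b (Aff (\<sigma> x1) (\<sigma> y1)) (Aff (\<sigma> x2) (\<sigma> y2)) = (if x1 = x2 \<and> y1 = - y2 then Inf else
        Aff (l' ^ 2 - \<sigma> x1 - \<sigma> x2) (l' * (\<sigma> x1 - (l' ^ 2 - \<sigma> x1 - \<sigma> x2)) - \<sigma> y1))"
      by (simp only: ec_add_aff l'_def c1 c2)
    show ?thesis unfolding P' Aff emap_simps E1 E2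
      using l m sl by simp
  qed (use P' in simp)
qed simp

lemma emap_smul:
  assumes a: "a \<in> K" and P: "inL L P"
  shows "emap \<sigma> (ec_smul a b n P) = ec_smul a b n (emap \<sigma> P) \<and> inL L (ec_smul a b n P)"
proof (induction n)
  case 0
  then show ?case by (simp add: ec_smul_def)
next
  case (Suc n)
  have aL: "a \<in> L" using a KL by blast
  have e: "ec_smul a b (Suc n) R = ec_add a b R (ec_smul a b n R)" for R
    by (simp add: ec_smul_def)
  show ?case unfolding e using Suc emap_add[OF a P] ec_add_inL[OF aL P] by simp
qed

lemma emap_inL: "inL L P \<Longrightarrow> inL L (emap \<sigma> P)"
  by (cases P) auto

lemma emap_points:
  assumes a: "a \<in> K" and b: "b \<in> K" and P: "P \<in> ec_points a b L"
  shows "emap \<sigma> P \<in> ec_points a b L"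
proof (cases P)
  case (Aff x y)
  then have m: "x \<in> L" "y \<in> L" "y ^ 2 = x ^ 3 + a * x + b" using P by (auto simp: ec_points_def)
  have aL: "a \<in> L" "b \<in> L" using a b KL by auto
  have sab: "\<sigma> a = a" "\<sigma> b = b" using s_K a b by auto
  have "\<sigma> y ^ 2 = \<sigma> (y ^ 2)" using m(2) by simp
  also have "\<dots> = \<sigma> (x ^ 3 + a * x + b)" using m(3) by simp
  also have "\<dots> = \<sigma> x ^ 3 + a * \<sigma> x + b" using m aL sab by simp
  finally have "\<sigma> y ^ 2 = \<sigma> x ^ 3 + a * \<sigma> x + b" .
  then show ?thesis using Aff m by (simp add: ec_points_def)
qed (simp add: ec_points_def)

lemma points_inL: "P \<in> ec_points a b F \<Longrightarrow> inL F P"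
  by (auto simp: ec_points_def)

lemma emap_torsion:
  assumes a: "a \<in> K" and b: "b \<in> K" and P: "P \<in> ec_torsion a b L q"
  shows "emap \<sigma> P \<in> ec_torsion a b L q"
proof -
  have Pp: "P \<in> ec_points a b L" "ec_smul a b q P = Inf" using P by (auto simp: ec_torsion_def)
  have "ec_smul a b q (emap \<sigma> P) = emap \<sigma> (ec_smul a b q P)"
    using emap_smul[OF a points_inL[OF Pp(1)]] by simp
  then show ?thesis using Pp emap_points[OF a b Pp(1)] by (simp add: ec_torsion_def)
qed

lemma emap_inj: "inj_on (emap \<sigma>) {P. inL L P}"
proof
  fix P Q assume "P \<in> {P. inL L P}" "Q \<in> {P. inL L P}" "emap \<sigma> P = emap \<sigma> Q"
  then show "P = Q" by (cases P; cases Q) (auto simp: s_inj)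
qed

end

lemma emap_pow: "(emap s ^^ n) P = emap (s ^^ n) P"
  by (induction n) (cases P; simp)+

lemma aut_ord_prop:
  assumes "has_finite_order L \<sigma>"
  shows "aut_ord L \<sigma> > 0 \<and> (\<forall>x\<in>L. (\<sigma> ^^ aut_ord L \<sigma>) x = x)"
  using assms unfolding has_finite_order_def aut_ord_def
  by (rule LeastI_ex)


definition tw :: "complex \<Rightarrow> complex \<Rightarrow> ecpt \<Rightarrow> ecpt" where
  "tw d s P = (case P of Inf \<Rightarrow> Inf | Aff x y \<Rightarrow> Aff (d * x) (d * s * y))"

lemma tw_simps[simp]: "tw d s Inf = Inf" "tw d s (Aff x y) = Aff (d * x) (d * s * y)"
  by (simp_all add: tw_def)

lemma ec_smul_Suc: "ec_smul a b (Suc n) P = ec_add a b P (ec_smul a b n P)"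
  by (simp add: ec_smul_def)
lemma ec_smul_0: "ec_smul a b 0 P = Inf"
  by (simp add: ec_smul_def)
lemma smul_Inf: "ec_smul a b n Inf = Inf"
  by (induction n) (simp_all add: ec_smul_0 ec_smul_Suc)

lemma tw_add:
  assumes d: "s ^ 2 = d" and s: "s \<noteq> 0"
  shows "tw d s (ec_add a b P Q) = ec_add (twist_a d a) (twist_b d b) (tw d s P) (tw d s Q)"
proof (cases P)
  case (Aff x1 y1)
  note P' = Aff
  show ?thesis
  proof (cases Q)
    case (Aff x2 y2)
    have d0: "d \<noteq> 0" using d s by auto
    have c1: "(d * x1 = d * x2) = (x1 = x2)" using d0 by simp
    have c2: "(d * s * y1 = - (d * s * y2)) = (y1 = - y2)" using d0 s
      by (metis minus_mult_right mult_cancel_left mult_eq_0_iff)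
    define l where "l = (if x1 = x2 then (3 * x1 ^ 2 + a) / (2 * y1) else (y2 - y1) / (x2 - x1))"
    define l' where "l' = (if d * x1 = d * x2 then (3 * (d * x1) ^ 2 + twist_a d a) / (2 * (d * s * y1))
                           else (d * s * y2 - d * s * y1) / (d * x2 - d * x1))"
    have ll: "l' = s * l"
    proof (cases "x1 = x2")
      case True
      then show ?thesis unfolding l_def l'_def twist_a_def using s d[symmetric]
        by (cases "y1 = 0") (simp_all add: field_simps power2_eq_square)
    next
      case False
      then have "x2 - x1 \<noteq> 0" by simp
      then show ?thesis unfolding l_def l'_def using s d[symmetric] False
        by (simp add: field_simps power2_eq_square)
    qed
    have E1: "ec_add a b (Aff x1 y1) (Aff x2 y2) = (if x1 = x2 \<and> y1 = - y2 then Inf else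
        Aff (l ^ 2 - x1 - x2) (l * (x1 - (l ^ 2 - x1 - x2)) - y1))"
      by (simp only: ec_add_aff l_def)
    have E2: "ec_add (twist_a d a) (twist_b d b) (Aff (d * x1) (d * s * y1)) (Aff (d * x2) (d * s * y2)) =
       (if x1 = x2 \<and> y1 = - y2 then Inf else
        Aff (l' ^ 2 - d * x1 - d * x2) (l' * (d * x1 - (l' ^ 2 - d * x1 - d * x2)) - d * s * y1))"
      by (simp only: ec_add_aff l'_def c1 c2)
    show ?thesis unfolding P' Aff tw_simps E1 E2 ll using d[symmetric]
      by (simp add: algebra_simps power2_eq_square)
  qed (use P' in simp)
qed simp

lemma tw_smul:
  assumes d: "s ^ 2 = d" and s: "s \<noteq> 0"
  shows "tw d s (ec_smul a b n P) = ec_smul (twist_a d a) (twist_b d b) n (tw d s P)"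
  by (induction n) (simp_all add: ec_smul_0 ec_smul_Suc tw_add[OF d s])

lemma tw_points:
  assumes d: "s ^ 2 = d" and F: "is_subfield F" "d \<in> F" "s \<in> F" and P: "P \<in> ec_points a b F"
  shows "tw d s P \<in> ec_points (twist_a d a) (twist_b d b) F"
proof (cases P)
  case (Aff x y)
  then have m: "x \<in> F" "y \<in> F" "y ^ 2 = x ^ 3 + a * x + b" using P by (auto simp: ec_points_def)
  have "(d * s * y) ^ 2 = d ^ 2 * s ^ 2 * y ^ 2" by (simp add: power_mult_distrib)
  also have "\<dots> = (d * x) ^ 3 + twist_a d a * (d * x) + twist_b d b"
    using m(3) d by (simp add: twist_a_def twist_b_def algebra_simps power2_eq_square power3_eq_cube)
  finally have e: "(d * s * y) ^ 2 = (d * x) ^ 3 + twist_a d a * (d * x) + twist_b d b" .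
  have "d * x \<in> F" "d * s * y \<in> F" using F m by (auto intro: sf_mult)
  then show ?thesis using Aff e by (simp add: ec_points_def)
qed (simp add: ec_points_def)

lemma tw_points_rev:
  assumes d: "s ^ 2 = d" and s: "s \<noteq> 0" and F: "is_subfield F" "d \<in> F" "s \<in> F"
    and Q: "Q \<in> ec_points (twist_a d a) (twist_b d b) F"
  shows "\<exists>P\<in>ec_points a b F. tw d s P = Q"
proof (cases Q)
  case Inf
  then show ?thesis by (intro bexI[of _ Inf]) (simp_all add: ec_points_def)
next
  case (Aff X Y)
  then have m: "X \<in> F" "Y \<in> F" "Y ^ 2 = X ^ 3 + twist_a d a * X + twist_b d b" using Q by (auto simp: ec_points_def)
  have d0: "d \<noteq> 0" using d s by auto
  define x where "x = X / d"
  define y where "y = Y / (d * s)"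
  have xy: "x \<in> F" "y \<in> F" unfolding x_def y_def using F m by (auto intro: sf_mult sf_divide)
  have tX: "d * x = X" "d * s * y = Y" unfolding x_def y_def using d0 s by simp_all
  have "y ^ 2 = x ^ 3 + a * x + b"
  proof -
    have "(d * s * y) ^ 2 = (d * x) ^ 3 + twist_a d a * (d * x) + twist_b d b" using tX m(3) by simp
    then have "d ^ 3 * y ^ 2 = d ^ 3 * (x ^ 3 + a * x + b)" using d[symmetric]
      by (simp add: twist_a_def twist_b_def algebra_simps power2_eq_square power3_eq_cube)
    then show ?thesis using d0 by simp
  qed
  then have "Aff x y \<in> ec_points a b F" using xy by (simp add: ec_points_def)
  then show ?thesis using tX Aff by (intro bexI[of _ "Aff x y"]) simp_all
qed

lemma tw_inj: assumes "d \<noteq> 0" "s \<noteq> 0" shows "inj (tw d s)"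
proof
  fix P Q assume "tw d s P = tw d s Q"
  then show "P = Q" using assms by (cases P; cases Q) auto
qed

lemma neg_lemma: "ec_add a b (Aff x y) R = Inf \<Longrightarrow> R = Aff x (- y)"
  by (cases R) (auto simp: Let_def split: if_splits)


lemma points_mono: "K \<subseteq> L \<Longrightarrow> ec_points a b K \<subseteq> ec_points a b L"
  by (auto simp: ec_points_def)
lemma torsion_mono: "K \<subseteq> L \<Longrightarrow> ec_torsion a b K q \<subseteq> ec_torsion a b L q"
  by (auto simp: ec_torsion_def ec_points_def)

theorem lemma4p1:
  fixes K L :: "complex set" and a b :: complex and q :: nat
  assumes K: "number_field K"
    and LK: "galois_ext L K"
    and fin: "\<forall>\<sigma>\<in>Gal L K. has_finite_order L \<sigma>"
    and E: "a \<in> K" "b \<in> K" "elliptic a b"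
    and q: "\<exists>p k. prime p \<and> k \<ge> 1 \<and> q = p ^ k" "odd q"
    and cyc: "cyclic_of_order a b (ec_torsion a b L q) q"
  shows "((\<forall>\<sigma>\<in>Gal L K. gcd (totient q) (aut_ord L \<sigma>) = 1)
            \<longrightarrow> ec_torsion a b L q = ec_torsion a b K q)
       \<and> ((\<forall>\<sigma>\<in>Gal L K. gcd (totient q) (aut_ord L \<sigma>) \<le> 2)
            \<longrightarrow> (\<exists>d\<in>K. d \<noteq> 0 \<and> (\<exists>s\<in>L. s ^ 2 = d) \<and>
                  ec_group_iso a b (ec_torsion a b L q)
                    (twist_a d a) (twist_b d b) (ec_torsion (twist_a d a) (twist_b d b) L q) \<and>
                  ec_torsion (twist_a d a) (twist_b d b) L q
                    = ec_torsion (twist_a d a) (twist_b d b) K q))"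
proof -
  obtain p k where pk: "prime p" "k \<ge> 1" "q = p ^ k" using q(1) by blast
  have p2: "p \<ge> 2" using pk(1) by (simp add: prime_ge_2_nat)
  have "p ^ 1 \<le> p ^ k" using pk(2) p2 by (intro power_increasing) auto
  then have q1: "q > 1" using pk(3) p2 by simp
  have q3: "q \<noteq> 2" using q(2) by auto
  have KL: "K \<subseteq> L" using gal_KL[OF LK] .
  have Ksf: "is_subfield K" using gal_K[OF LK] .
  have Lsf: "is_subfield L" using gal_L[OF LK] .
  define S where "S = ec_torsion a b L q"
  obtain f where f: "bij_betw f {0..<q} S"
    and fadd: "\<forall>i<q. \<forall>j<q. f ((i + j) mod q) = ec_add a b (f i) (f j)"
    using cyc unfolding cyclic_of_order_def S_def by blast
  have Sf: "S = f ` {0..<q}" using f by (simp add: bij_betw_def)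
  have finj: "i = j" if "i < q" "j < q" "f i = f j" for i j
    using f that unfolding bij_betw_def inj_on_def by auto
  have fi: "f i \<in> S" if "i < q" for i using Sf that by auto
  have SinL: "inL L P" if "P \<in> S" for P using that unfolding S_def ec_torsion_def ec_points_def by auto
  have InfS: "Inf \<in> S" unfolding S_def ec_torsion_def by (simp add: ec_points_def smul_Inf)
  have f0: "f 0 = Inf"
  proof -
    obtain j where j: "j < q" "f j = Inf" using InfS Sf by auto
    have "f ((j + j) mod q) = f j" using fadd j by simp
    then have "(j + j) mod q = j" using finj j q1 by simp
    then have "j = 0" using mod_double_zero j by blast
    then show ?thesis using j by simp
  qed
  have act: "\<exists>c. coprime c q \<and> [c ^ aut_ord L \<sigma> = 1] (mod q) \<and> (\<forall>i<q. emap \<sigma> (f i) = f ((c * i) mod q))"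
    if sg: "\<sigma> \<in> Gal L K" for \<sigma>
  proof -
    interpret galaut L K \<sigma> using LK sg by unfold_locales
    have hS: "emap \<sigma> ` S \<subseteq> S" using emap_torsion[OF E(1,2)] unfolding S_def by blast
    have hinj: "inj_on (emap \<sigma>) S" using inj_on_subset[OF emap_inj] SinL by blast
    have hadd: "\<forall>P\<in>S. \<forall>Q\<in>S. emap \<sigma> (ec_add a b P Q) = ec_add a b (emap \<sigma> P) (emap \<sigma> Q)"
      using emap_add[OF E(1)] SinL by blast
    obtain c where c: "coprime c q" "\<forall>i<q. emap \<sigma> (f i) = f ((c * i) mod q)"
      using cyc_aut[OF q1 f fadd hS hinj hadd] by blast
    define N where "N = aut_ord L \<sigma>"
    have N: "N > 0" "\<forall>x\<in>L. (\<sigma> ^^ N) x = x" using aut_ord_prop fin sg unfolding N_def by blast+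
    have "(emap \<sigma> ^^ N) (f 1) = f 1"
    proof -
      have "inL L (f 1)" using SinL fi q1 by blast
      then show ?thesis unfolding emap_pow using N(2) by (cases "f 1") auto
    qed
    moreover have "(emap \<sigma> ^^ N) (f 1) = f ((c ^ N * 1) mod q)" using cyc_iter[OF c(2) q1] .
    ultimately have "f ((c ^ N) mod q) = f 1" by simp
    then have "(c ^ N) mod q = 1" using finj q1 by simp
    then have "[c ^ N = 1] (mod q)" using q1 by (simp add: cong_def)
    then show ?thesis using c N_def by blast
  qed
  have fixall: "\<forall>P\<in>S. emap \<sigma> P = P"
    if sg: "\<sigma> \<in> Gal L K" and g1: "gcd (totient q) (aut_ord L \<sigma>) = 1" for \<sigma>
  proof
    fix P assume P: "P \<in> S"
    obtain c where c: "coprime c q" "[c ^ aut_ord L \<sigma> = 1] (mod q)" "\<forall>i<q. emap \<sigma> (f i) = f ((c * i) mod q)"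
      using act[OF sg] by blast
    have cm: "c mod q = 1" using nt_main(2)[OF pk(1,3,2) q(2) c(1,2)] g1 by simp
    obtain i where i: "i < q" "P = f i" using P Sf by auto
    have "(c * i) mod q = i" using cm i by (metis mod_mult_left_eq mult_1 mod_less)
    then show "emap \<sigma> P = P" using c(3) i by simp
  qed
  define eneg where "eneg P = (case P of Inf \<Rightarrow> Inf | Aff x y \<Rightarrow> Aff x (- y))" for P
  have signs: "(\<forall>P\<in>S. emap \<sigma> P = P) \<or> (\<forall>P\<in>S. emap \<sigma> P = eneg P)"
    if sg: "\<sigma> \<in> Gal L K" and g2: "gcd (totient q) (aut_ord L \<sigma>) \<le> 2" for \<sigma>
  proof -
    obtain c where c: "coprime c q" "[c ^ aut_ord L \<sigma> = 1] (mod q)" "\<forall>i<q. emap \<sigma> (f i) = f ((c * i) mod q)"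
      using act[OF sg] by blast
    have "c mod q = 1 \<or> c mod q = q - 1" using nt_main(1)[OF pk(1,3,2) q(2) c(1,2) g2] .
    then show ?thesis
    proof
      assume cm: "c mod q = 1"
      have "emap \<sigma> P = P" if P: "P \<in> S" for P
      proof -
        obtain i where i: "i < q" "P = f i" using P Sf by auto
        have "(c * i) mod q = i" using cm i by (metis mod_mult_left_eq mult_1 mod_less)
        then show "emap \<sigma> P = P" using c(3) i by simp
      qed
      then show ?thesis by blast
    next
      assume cm: "c mod q = q - 1"
      have "emap \<sigma> P = eneg P" if P: "P \<in> S" for P
      proof -
        obtain i where i: "i < q" "P = f i" using P Sf by auto
        define j where "j = (c * i) mod q"
        have j: "j < q" unfolding j_def using q1 by simp
        have "(i + j) mod q = (i + c * i) mod q" unfolding j_def by (simp add: mod_add_right_eq)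
        also have "\<dots> = (i + (c mod q) * i) mod q" by (metis mod_add_right_eq mod_mult_left_eq)
        also have "\<dots> = (q * i) mod q" using cm q1
          by (metis add.commute le_add_diff_inverse less_imp_le_nat mult.commute mult_Suc_right plus_1_eq_Suc)
        also have "\<dots> = 0" by simp
        finally have "ec_add a b (f i) (f j) = Inf" using fadd i j f0 by metis
        then have "f j = eneg (f i)"
          unfolding eneg_def by (cases "f i") (auto dest: neg_lemma)
        then show ?thesis using c(3) i j_def by simp
      qed
      then show ?thesis by blast
    qed
  qed
  show ?thesis
  proof (intro conjI impI)
    assume H: "\<forall>\<sigma>\<in>Gal L K. gcd (totient q) (aut_ord L \<sigma>) = 1"
    show "ec_torsion a b L q = ec_torsion a b K q"
    proof
      show "ec_torsion a b L q \<subseteq> ec_torsion a b K q"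
      proof
        fix P assume P: "P \<in> ec_torsion a b L q"
        show "P \<in> ec_torsion a b K q"
        proof (cases P)
          case Inf
          then show ?thesis by (simp add: ec_torsion_def ec_points_def smul_Inf)
        next
          case (Aff x y)
          have xy: "x \<in> L" "y \<in> L" "y ^ 2 = x ^ 3 + a * x + b" "ec_smul a b q P = Inf"
            using P Aff by (auto simp: ec_torsion_def ec_points_def)
          have "\<forall>\<sigma>\<in>Gal L K. \<sigma> x = x \<and> \<sigma> y = y"
            using fixall H P Aff unfolding S_def by fastforce
          then have "x \<in> K" "y \<in> K" using fixed_field[OF LK] xy by blast+
          then show ?thesis using xy Aff by (simp add: ec_torsion_def ec_points_def)
        qed
      qed
      show "ec_torsion a b K q \<subseteq> ec_torsion a b L q" by (rule torsion_mono[OF KL])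
    qed
  next
    assume H: "\<forall>\<sigma>\<in>Gal L K. gcd (totient q) (aut_ord L \<sigma>) \<le> 2"
    have sg2: "\<And>\<sigma>. \<sigma> \<in> Gal L K \<Longrightarrow> (\<forall>P\<in>S. emap \<sigma> P = P) \<or> (\<forall>P\<in>S. emap \<sigma> P = eneg P)"
      using signs H by blast
    obtain x0 y0 where P1: "f 1 = Aff x0 y0"
    proof (cases "f 1")
      case Inf
      then have "f 1 = f 0" using f0 by simp
      then show ?thesis using finj q1 by fastforce
    qed
    have P1S: "Aff x0 y0 \<in> S" using fi q1 P1 by metis
    have y0L: "x0 \<in> L" "y0 \<in> L" using SinL[OF P1S] by auto
    have y00: "y0 \<noteq> 0"
    proof
      assume "y0 = 0"
      then have "ec_add a b (f 1) (f 1) = Inf" using P1 by simp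
      then have "f ((1 + 1) mod q) = f 0" using fadd q1 f0 by metis
      then have "(1 + 1) mod q = 0" using finj q1 by simp
      then have "q dvd 1 + 1" by (simp only: mod_eq_0_iff_dvd)
      then have "q dvd 2" by (simp add: numeral_2_eq_2)
      then have "q \<le> 2" by (rule dvd_imp_le) simp
      then show False using q1 q3 by simp
    qed
    have fixprod: "x \<in> K \<and> y0 * y \<in> K" if "Aff x y \<in> S" for x y
    proof -
      have m: "x \<in> L" "y \<in> L" using SinL[OF that] by auto
      have "\<sigma> x = x \<and> \<sigma> (y0 * y) = y0 * y" if sg: "\<sigma> \<in> Gal L K" for \<sigma>
      proof -
        interpret galaut L K \<sigma> using LK sg by unfold_locales
        from sg2[OF sg] show ?thesis
        proof
          assume "\<forall>P\<in>S. emap \<sigma> P = P"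
          then have "emap \<sigma> (Aff x y) = Aff x y" "emap \<sigma> (Aff x0 y0) = Aff x0 y0" using \<open>Aff x y \<in> S\<close> P1S by blast+
          then show ?thesis using m y0L by simp
        next
          assume "\<forall>P\<in>S. emap \<sigma> P = eneg P"
          then have "emap \<sigma> (Aff x y) = eneg (Aff x y)" "emap \<sigma> (Aff x0 y0) = eneg (Aff x0 y0)" using \<open>Aff x y \<in> S\<close> P1S by blast+
          then show ?thesis using m y0L by (simp add: eneg_def)
        qed
      qed
      then show ?thesis using fixed_field[OF LK] m y0L Lsf by (auto intro: sf_mult)
    qed
    define d where "d = y0 * y0"
    define s where "s = y0"
    have dK: "d \<in> K" using fixprod[OF P1S] unfolding d_def by blast
    have d0: "d \<noteq> 0" using y00 unfolding d_def by simp
    have sd: "s ^ 2 = d" unfolding s_def d_def by (simp add: power2_eq_square)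
    have s0: "s \<noteq> 0" using y00 unfolding s_def by simp
    have sL: "s \<in> L" using y0L unfolding s_def by simp
    have dL: "d \<in> L" using dK KL by blast
    define S' where "S' = ec_torsion (twist_a d a) (twist_b d b) L q"
    have img: "tw d s ` S = S'"
    proof
      show "tw d s ` S \<subseteq> S'"
      proof
        fix Q assume "Q \<in> tw d s ` S"
        then obtain P where P: "P \<in> S" "Q = tw d s P" by blast
        have Pp: "P \<in> ec_points a b L" "ec_smul a b q P = Inf" using P(1) unfolding S_def ec_torsion_def by auto
        have "ec_smul (twist_a d a) (twist_b d b) q Q = Inf" using tw_smul[OF sd s0, of a b q P] Pp P(2) by simp
        then show "Q \<in> S'" using tw_points[OF sd Lsf dL sL Pp(1)] P(2) unfolding S'_def ec_torsion_def by simp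
      qed
      show "S' \<subseteq> tw d s ` S"
      proof
        fix Q assume Q: "Q \<in> S'"
        have Qp: "Q \<in> ec_points (twist_a d a) (twist_b d b) L" "ec_smul (twist_a d a) (twist_b d b) q Q = Inf"
          using Q unfolding S'_def ec_torsion_def by auto
        obtain P where P: "P \<in> ec_points a b L" "tw d s P = Q" using tw_points_rev[OF sd s0 Lsf dL sL Qp(1)] by blast
        have "tw d s (ec_smul a b q P) = tw d s Inf" using tw_smul[OF sd s0, of a b q P] P(2) Qp(2) by simp
        then have "ec_smul a b q P = Inf" using injD[OF tw_inj[OF d0 s0]] by blast
        then have "P \<in> S" using P(1) unfolding S_def ec_torsion_def by simp
        then show "Q \<in> tw d s ` S" using P(2) by blast
      qed
    qed
    have iso: "ec_group_iso a b S (twist_a d a) (twist_b d b) S'"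
      unfolding ec_group_iso_def
    proof (intro exI conjI)
      show "bij_betw (tw d s) S S'" unfolding bij_betw_def using img inj_on_subset[OF tw_inj[OF d0 s0]] by blast
      show "\<forall>P\<in>S. \<forall>Q\<in>S. tw d s (ec_add a b P Q) = ec_add (twist_a d a) (twist_b d b) (tw d s P) (tw d s Q)"
        using tw_add[OF sd s0] by blast
    qed
    have eqK: "S' = ec_torsion (twist_a d a) (twist_b d b) K q"
    proof
      show "S' \<subseteq> ec_torsion (twist_a d a) (twist_b d b) K q"
      proof
        fix Q assume Q: "Q \<in> S'"
        then obtain P where P: "P \<in> S" "Q = tw d s P" using img by blast
        have Qp: "Q \<in> ec_points (twist_a d a) (twist_b d b) L" "ec_smul (twist_a d a) (twist_b d b) q Q = Inf"
          using Q unfolding S'_def ec_torsion_def by auto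
        show "Q \<in> ec_torsion (twist_a d a) (twist_b d b) K q"
        proof (cases P)
          case Inf
          then show ?thesis using P(2) by (simp add: ec_torsion_def ec_points_def smul_Inf)
        next
          case (Aff x y)
          have xy: "x \<in> K" "y0 * y \<in> K" using fixprod P(1) Aff by blast+
          have c1: "d * x \<in> K" using xy dK Ksf by (simp add: sf_mult)
          have e: "d * s * y = d * (y0 * y)" unfolding s_def by (simp add: mult.assoc)
          have "d * (y0 * y) \<in> K" using xy dK Ksf by (simp add: sf_mult)
          then have c2: "d * s * y \<in> K" by (simp only: e)
          have "Q = Aff (d * x) (d * s * y)" using P(2) Aff by simp
          then show ?thesis using Qp c1 c2 by (simp add: ec_torsion_def ec_points_def)
        qed
      qed
      show "ec_torsion (twist_a d a) (twist_b d b) K q \<subseteq> S'" unfolding S'_def by (rule torsion_mono[OF KL])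
    qed
    have "\<exists>s\<in>L. s ^ 2 = d" using sL sd by blast
    then show "\<exists>d\<in>K. d \<noteq> 0 \<and> (\<exists>s\<in>L. s ^ 2 = d) \<and>
                  ec_group_iso a b (ec_torsion a b L q)
                    (twist_a d a) (twist_b d b) (ec_torsion (twist_a d a) (twist_b d b) L q) \<and>
                  ec_torsion (twist_a d a) (twist_b d b) L q
                    = ec_torsion (twist_a d a) (twist_b d b) K q"
      using dK d0 iso eqK unfolding S_def S'_def by blast
  qed
qed

end
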